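(* Let $n\ge2$ and let $A$ be an $n\times n$ irreducible completely positive matrix whose graph $G(A)$ is triangle free. Then the following are equivalent: (a) the comparison matrix $M(A)$ is singular; (b) $A$ has a unique CP factorization; (c) $A$ has a unique minimal CP factorization.
   Context: A symmetric $n\times n$ matrix $A$ is completely positive if $A=BB^T$ for some entrywise nonnegative $n\times k$ matrix $B$; such an equality is a CP factorization of $A$. Only CP factorizations in which the columns of $B$ are pairwise linearly independent are considered, and two CP factorizations $A=BB^T=CC^T$ are considered equal if $C=BP$ for a permutation matrix $P$. The cp-rank of $A$ is the minimal number of columns of such a nonnegative $B$; a CP factorization with that many columns is called minimal. The graph $G(A)$ of a symmetric $n\times n$ matrix $A$ has vertex set $\{1,\dots,n\}$, with $\{i,j\}$ ($i\ne j$) an edge iff $a_{ij}\ne 0$; $A$ is irreducible iff $G(A)$ is connected. A graph is triangle free if it contains no clique on three vertices. The comparison matrix $M(A)$ of a square matrix $A$ is given by $M(A)_{ii}=|a_{ii}|$ and $M(A)_{ij}=-|a_{ij}|$ for $i\ne j$. *)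

theory Defs
  imports "HOL-Analysis.Analysis"
begin

text \<open>An n x k matrix B is represented by its entries B i j, i :: 'n (row), j < k (column).
  B B^T has entries (sum j<k. B i j * B i' j).\<close>

definition nonneg_factor :: "real^'n^'n \<Rightarrow> nat \<Rightarrow> ('n \<Rightarrow> nat \<Rightarrow> real) \<Rightarrow> bool" where
  "nonneg_factor A k B \<longleftrightarrow>
     (\<forall>i. \<forall>j<k. 0 \<le> B i j) \<and>
     (\<forall>i i'. A $ i $ i' = (\<Sum>j<k. B i j * B i' j))"

definition completely_positive :: "real^'n^'n \<Rightarrow> bool" where
  "completely_positive A \<longleftrightarrow> (\<exists>k B. nonneg_factor A k B)"

definition cols_lin_dep :: "('n \<Rightarrow> nat \<Rightarrow> real) \<Rightarrow> nat \<Rightarrow> nat \<Rightarrow> bool" where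
  "cols_lin_dep B j l \<longleftrightarrow> (\<exists>a b. (a \<noteq> 0 \<or> b \<noteq> 0) \<and> (\<forall>i. a * B i j + b * B i l = 0))"

definition cp_factorization :: "real^'n^'n \<Rightarrow> nat \<Rightarrow> ('n \<Rightarrow> nat \<Rightarrow> real) \<Rightarrow> bool" where
  "cp_factorization A k B \<longleftrightarrow> nonneg_factor A k B \<and>
     (\<forall>j<k. \<forall>l<k. j \<noteq> l \<longrightarrow> \<not> cols_lin_dep B j l)"

definition same_factorization :: "nat \<Rightarrow> ('n \<Rightarrow> nat \<Rightarrow> real) \<Rightarrow> nat \<Rightarrow> ('n \<Rightarrow> nat \<Rightarrow> real) \<Rightarrow> bool" where
  "same_factorization k B k' C \<longleftrightarrow> k = k' \<and>
     (\<exists>p. p permutes {..<k} \<and> (\<forall>i. \<forall>j<k. C i j = B i (p j)))"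

definition cp_rank :: "real^'n^'n \<Rightarrow> nat" where
  "cp_rank A = (LEAST k. \<exists>B. nonneg_factor A k B)"

definition minimal_cp_factorization :: "real^'n^'n \<Rightarrow> nat \<Rightarrow> ('n \<Rightarrow> nat \<Rightarrow> real) \<Rightarrow> bool" where
  "minimal_cp_factorization A k B \<longleftrightarrow> cp_factorization A k B \<and> k = cp_rank A"

definition unique_cp_factorization :: "real^'n^'n \<Rightarrow> bool" where
  "unique_cp_factorization A \<longleftrightarrow> (\<exists>k B. cp_factorization A k B) \<and>
     (\<forall>k B k' C. cp_factorization A k B \<and> cp_factorization A k' C \<longrightarrow> same_factorization k B k' C)"

definition unique_minimal_cp_factorization :: "real^'n^'n \<Rightarrow> bool" where
  "unique_minimal_cp_factorization A \<longleftrightarrow> (\<exists>k B. minimal_cp_factorization A k B) \<and>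
     (\<forall>k B k' C. minimal_cp_factorization A k B \<and> minimal_cp_factorization A k' C
        \<longrightarrow> same_factorization k B k' C)"

definition graph_edge :: "real^'n^'n \<Rightarrow> 'n \<Rightarrow> 'n \<Rightarrow> bool" where
  "graph_edge A i j \<longleftrightarrow> i \<noteq> j \<and> A $ i $ j \<noteq> 0"

definition irreducible_mat :: "real^'n^'n \<Rightarrow> bool" where
  "irreducible_mat A \<longleftrightarrow> (\<forall>i j. (graph_edge A)\<^sup>*\<^sup>* i j)"

definition triangle_free_graph :: "real^'n^'n \<Rightarrow> bool" where
  "triangle_free_graph A \<longleftrightarrow>
     \<not> (\<exists>i j l. graph_edge A i j \<and> graph_edge A j l \<and> graph_edge A i l)"

definition comparison_matrix :: "real^'n^'n \<Rightarrow> real^'n^'n" where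
  "comparison_matrix A = (\<chi> i j. if i = j then \<bar>A $ i $ i\<bar> else - \<bar>A $ i $ j\<bar>)"

end

theory Submission
  imports Defs "HOL-Library.Multiset"
begin


definition vdep :: "('n \<Rightarrow> real) \<Rightarrow> ('n \<Rightarrow> real) \<Rightarrow> bool" where
  "vdep u w \<longleftrightarrow> (\<exists>a b. (a \<noteq> 0 \<or> b \<noteq> 0) \<and> (\<forall>i. a * u i + b * w i = 0))"

definition cpset :: "real^'n^'n \<Rightarrow> ('n \<Rightarrow> real) set \<Rightarrow> bool" where
  "cpset A S \<longleftrightarrow> finite S \<and> (\<forall>c\<in>S. \<forall>i. 0 \<le> c i) \<and>
     (\<forall>c\<in>S. \<forall>d\<in>S. c \<noteq> d \<longrightarrow> \<not> vdep c d) \<and>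
     (\<forall>i i'. A $ i $ i' = (\<Sum>c\<in>S. c i * c i'))"

definition colsof :: "nat \<Rightarrow> ('n \<Rightarrow> nat \<Rightarrow> real) \<Rightarrow> ('n \<Rightarrow> real) list" where
  "colsof k B = map (\<lambda>j i. B i j) [0..<k]"

lemma vdep_refl: "vdep c c"
  unfolding vdep_def by (rule exI[of _ 1], rule exI[of _ "-1"]) simp

lemma colsof_nth: "j < k \<Longrightarrow> colsof k B ! j = (\<lambda>i. B i j)"
  by (simp add: colsof_def)

lemma length_colsof[simp]: "length (colsof k B) = k"
  by (simp add: colsof_def)

lemma set_colsof: "set (colsof k B) = (\<lambda>j i. B i j) ` {..<k}"
  by (auto simp: colsof_def)

lemma sum_colsof: "(\<Sum>j<k. f (\<lambda>i. B i j)) = sum_list (map f (colsof k B))"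
  by (simp add: colsof_def sum_set_upt_conv_sum_list_nat[symmetric] atLeast0LessThan)

lemma L1:
  assumes "cp_factorization A k B"
  shows "distinct (colsof k B) \<and> cpset A (set (colsof k B))"
proof -
  have nf: "nonneg_factor A k B" and pw: "\<forall>j<k. \<forall>l<k. j \<noteq> l \<longrightarrow> \<not> cols_lin_dep B j l"
    using assms unfolding cp_factorization_def by auto
  have dist: "distinct (colsof k B)"
  proof (rule distinct_conv_nth[THEN iffD2], intro allI impI)
    fix j l assume "j < length (colsof k B)" "l < length (colsof k B)" "j \<noteq> l"
    then have "\<not> cols_lin_dep B j l" using pw by auto
    then have "\<not> vdep (\<lambda>i. B i j) (\<lambda>i. B i l)" unfolding cols_lin_dep_def vdep_def by simp
    then show "colsof k B ! j \<noteq> colsof k B ! l"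
      using \<open>j < _\<close> \<open>l < _\<close> by (auto simp: colsof_nth vdep_refl)
  qed
  have "cpset A (set (colsof k B))"
    unfolding cpset_def
  proof (intro conjI ballI allI impI)
    show "finite (set (colsof k B))" by simp
  next
    fix c i assume "c \<in> set (colsof k B)"
    then show "0 \<le> c i" using nf by (auto simp: set_colsof nonneg_factor_def)
  next
    fix c d assume "c \<in> set (colsof k B)" "d \<in> set (colsof k B)" "c \<noteq> d"
    then obtain j l where "j < k" "l < k" "c = (\<lambda>i. B i j)" "d = (\<lambda>i. B i l)"
      by (auto simp: set_colsof)
    moreover then have "j \<noteq> l" using \<open>c \<noteq> d\<close> by auto
    ultimately show "\<not> vdep c d" using pw unfolding cols_lin_dep_def vdep_def by auto
  next
    fix i i'
    have "A $ i $ i' = (\<Sum>j<k. (\<lambda>c. c i * c i') (\<lambda>i. B i j))"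
      using nf by (simp add: nonneg_factor_def)
    also have "\<dots> = sum_list (map (\<lambda>c. c i * c i') (colsof k B))" by (rule sum_colsof)
    also have "\<dots> = (\<Sum>c\<in>set (colsof k B). c i * c i')"
      using dist by (simp add: sum_list_distinct_conv_sum_set)
    finally show "A $ i $ i' = (\<Sum>c\<in>set (colsof k B). c i * c i')" .
  qed
  with dist show ?thesis by simp
qed

lemma L1card:
  assumes "cp_factorization A k B"
  shows "card (set (colsof k B)) = k"
  using L1[OF assms] by (simp add: distinct_card)

lemma L2:
  assumes "cpset A S"
  shows "\<exists>B. cp_factorization A (card S) B \<and> set (colsof (card S) B) = S"
proof -
  have fin: "finite S" using assms by (simp add: cpset_def)
  obtain L where L: "set L = S" "distinct L" using finite_distinct_list[OF fin] by blast
  have cardS: "card S = length L" using L by (simp add: distinct_card[symmetric])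
  define B where "B = (\<lambda>i j. (L ! j) i)"
  have cols: "colsof (length L) B = L"
    by (rule nth_equalityI) (auto simp: colsof_nth B_def)
  have "cp_factorization A (length L) B"
    unfolding cp_factorization_def nonneg_factor_def
  proof (intro conjI allI impI)
    fix i j assume "j < length L"
    then have "L ! j \<in> S" using L by auto
    then show "0 \<le> B i j" using assms by (simp add: cpset_def B_def)
  next
    fix i i'
    have "A $ i $ i' = (\<Sum>c\<in>S. c i * c i')" using assms by (simp add: cpset_def)
    also have "\<dots> = sum_list (map (\<lambda>c. c i * c i') L)"
      using L by (simp add: sum_list_distinct_conv_sum_set)
    also have "\<dots> = sum_list (map (\<lambda>c. c i * c i') (colsof (length L) B))" by (simp add: cols)
    also have "\<dots> = (\<Sum>j<length L. B i j * B i' j)" by (simp add: sum_colsof[symmetric])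
    finally show "A $ i $ i' = (\<Sum>j<length L. B i j * B i' j)" .
  next
    fix j l assume "j < length L" "l < length L" "j \<noteq> l"
    then have "L ! j \<noteq> L ! l" "L ! j \<in> S" "L ! l \<in> S" using L by (auto simp: nth_eq_iff_index_eq)
    then have "\<not> vdep (L ! j) (L ! l)" using assms by (simp add: cpset_def)
    then show "\<not> cols_lin_dep B j l" unfolding cols_lin_dep_def vdep_def B_def by simp
  qed
  then show ?thesis using cols L cardS by auto
qed

lemma L3:
  assumes "cp_factorization A k B" "cp_factorization A k' C"
  shows "same_factorization k B k' C \<longleftrightarrow> set (colsof k B) = set (colsof k' C)"
proof
  assume "same_factorization k B k' C"
  then obtain p where kk: "k = k'" and p: "p permutes {..<k}" and pc: "\<forall>i. \<forall>j<k. C i j = B i (p j)"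
    unfolding same_factorization_def by auto
  have "set (colsof k' C) = (\<lambda>j i. C i j) ` {..<k}" by (simp add: set_colsof kk)
  also have "\<dots> = (\<lambda>j i. B i j) ` (p ` {..<k})"
    using pc by (auto simp: image_iff)
  also have "\<dots> = set (colsof k B)" by (simp add: permutes_image[OF p] set_colsof)
  finally show "set (colsof k B) = set (colsof k' C)" by simp
next
  assume eq: "set (colsof k B) = set (colsof k' C)"
  have "mset (colsof k' C) = mset (colsof k B)"
    using eq L1[OF assms(1)] L1[OF assms(2)] set_eq_iff_mset_eq_distinct by metis
  then obtain p where p: "p permutes {..<length (colsof k B)}"
    and pl: "permute_list p (colsof k B) = colsof k' C"
    by (rule mset_eq_permutation)
  have kk: "k = k'" using pl by (metis length_colsof length_permute_list)
  have "\<forall>i. \<forall>j<k. C i j = B i (p j)"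
  proof (intro allI impI)
    fix i j assume "j < k"
    have "colsof k' C ! j = colsof k B ! p j" using pl permute_list_nth[OF p] \<open>j < k\<close> by auto
    moreover have "p j < k" using permutes_in_image[OF p, of j] \<open>j<k\<close> by simp
    ultimately show "C i j = B i (p j)" using \<open>j<k\<close> kk by (simp add: colsof_nth fun_eq_iff)
  qed
  then show "same_factorization k B k' C" using p kk unfolding same_factorization_def by auto
qed


definition mfac :: "real^'n^'n \<Rightarrow> ('n \<Rightarrow> real) multiset \<Rightarrow> bool" where
  "mfac A M \<longleftrightarrow> (\<forall>c\<in>#M. \<forall>i. 0 \<le> c i) \<and> (\<forall>i i'. A $ i $ i' = (\<Sum>c\<in>#M. c i * c i'))"

lemma merge_vec:
  assumes "\<forall>i. 0 \<le> c i" "\<forall>i. 0 \<le> d i" "vdep c d"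
  shows "\<exists>w. (\<forall>i. 0 \<le> w i) \<and> (\<forall>i i'. w i * w i' = c i * c i' + d i * d i')"
proof -
  obtain a b where ab: "a \<noteq> 0 \<or> b \<noteq> 0" "\<forall>i. a * c i + b * d i = 0"
    using assms(3) unfolding vdep_def by auto
  show ?thesis
  proof (cases "b = 0")
    case True
    then have "\<forall>i. c i = 0" using ab by auto
    then show ?thesis using assms(2) by (intro exI[of _ d]) auto
  next
    case False
    define \<mu> where "\<mu> = - a / b"
    have dm: "\<forall>i. d i = \<mu> * c i"
    proof
      fix i
      have "b * d i = - a * c i" using ab(2) by (simp add: algebra_simps) (metis add.commute add_eq_0_iff)
      then show "d i = \<mu> * c i" using False by (simp add: \<mu>_def field_simps)
    qed
    define w where "w = (\<lambda>i. sqrt (1 + \<mu>^2) * c i)"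
    have "\<forall>i i'. w i * w i' = c i * c i' + d i * d i'"
    proof (intro allI)
      fix i i'
      have "w i * w i' = (sqrt (1 + \<mu>^2))^2 * (c i * c i')" by (simp add: w_def power2_eq_square algebra_simps)
      also have "\<dots> = (1 + \<mu>^2) * (c i * c i')" by simp
      also have "\<dots> = c i * c i' + d i * d i'" using dm by (simp add: power2_eq_square algebra_simps)
      finally show "w i * w i' = c i * c i' + d i * d i'" .
    qed
    moreover have "\<forall>i. 0 \<le> w i" using assms(1) by (simp add: w_def)
    ultimately show ?thesis by blast
  qed
qed

lemma merge:
  assumes "mfac A M"
  shows "\<exists>S. cpset A S \<and> card S \<le> size M"
  using assms
proof (induction "size M" arbitrary: M rule: less_induct)
  case less
  show ?case
  proof (cases "\<exists>c d. {#c, d#} \<subseteq># M \<and> vdep c d")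
    case True
    then obtain c d where cd: "{#c, d#} \<subseteq># M" "vdep c d" by blast
    have cM: "c \<in># M" and dM: "d \<in># M" using mset_subset_eqD[OF cd(1), of c] mset_subset_eqD[OF cd(1), of d]
      by simp_all
    then have nn: "\<forall>i. 0 \<le> c i" "\<forall>i. 0 \<le> d i" using less.prems by (auto simp: mfac_def)
    obtain w where w: "\<forall>i. 0 \<le> w i" "\<forall>i i'. w i * w i' = c i * c i' + d i * d i'"
      using merge_vec[OF nn cd(2)] by blast
    define R where "R = M - {#c, d#}"
    have MR: "M = R + {#c, d#}" using subset_mset.diff_add[OF cd(1)] by (simp add: R_def)
    define M' where "M' = add_mset w R"
    have sz: "size M' < size M" by (simp add: M'_def MR)
    have "mfac A M'"
      unfolding mfac_def
    proof (intro conjI ballI allI)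
      fix e i assume "e \<in># M'"
      then have "e = w \<or> e \<in># M" by (auto simp: M'_def MR)
      then show "0 \<le> e i" using w less.prems by (auto simp: mfac_def)
    next
      fix i i'
      have "A $ i $ i' = (\<Sum>e\<in>#M. e i * e i')" using less.prems by (simp add: mfac_def)
      also have "\<dots> = (\<Sum>e\<in>#R. e i * e i') + c i * c i' + d i * d i'" by (simp add: MR)
      also have "\<dots> = (\<Sum>e\<in>#M'. e i * e i')" by (simp add: M'_def w(2))
      finally show "A $ i $ i' = (\<Sum>e\<in>#M'. e i * e i')" .
    qed
    from less.hyps[OF sz this] obtain S where "cpset A S" "card S \<le> size M'" by blast
    then show ?thesis using sz by (intro exI[of _ S]) auto
  next
    case False
    obtain xs where xs: "mset xs = M" using ex_mset by blast
    have cnt: "count M a \<le> 1" for a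
    proof (rule ccontr)
      assume "\<not> count M a \<le> 1"
      then have "{#a, a#} \<subseteq># M" by (auto simp: subseteq_mset_def)
      then show False using False vdep_refl by blast
    qed
    have dist: "distinct xs"
      unfolding distinct_count_atmost_1
    proof
      fix a
      show "count (mset xs) a = (if a \<in> set xs then 1 else 0)"
      proof (cases "a \<in> set xs")
        case True
        then have "count M a > 0" using xs by (metis count_greater_zero_iff in_multiset_in_set)
        then have "count M a \<ge> 1" by simp
        then have "count M a = 1" using cnt[of a] by (rule antisym[rotated])
        then show ?thesis using xs True by simp
      next
        case False then show ?thesis by (simp add: count_mset_0_iff)
      qed
    qed
    show ?thesis
    proof (intro exI conjI)
      show "card (set xs) \<le> size M" using dist xs[symmetric] by (simp add: distinct_card)
      show "cpset A (set xs)"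
        unfolding cpset_def
      proof (intro conjI ballI allI impI)
        show "finite (set xs)" by simp
      next
        fix c i assume "c \<in> set xs"
        then show "0 \<le> c i" using less.prems xs by (auto simp: mfac_def)
      next
        fix c d assume cd: "c \<in> set xs" "d \<in> set xs" "c \<noteq> d"
        have "{#c, d#} \<subseteq># M"
          using cd xs by (auto simp: subseteq_mset_def)
        then show "\<not> vdep c d" using False by blast
      next
        fix i i'
        have "A $ i $ i' = (\<Sum>e\<in>#M. e i * e i')" using less.prems by (simp add: mfac_def)
        also have "\<dots> = sum_list (map (\<lambda>e. e i * e i') xs)"
          by (simp only: xs[symmetric] mset_map[symmetric] sum_mset_sum_list)
        also have "\<dots> = (\<Sum>e\<in>set xs. e i * e i')" using dist by (simp add: sum_list_distinct_conv_sum_set)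
        finally show "A $ i $ i' = (\<Sum>e\<in>set xs. e i * e i')" .
      qed
    qed
  qed
qed

lemma mfac_of_nonneg:
  assumes "nonneg_factor A k B"
  shows "mfac A (mset (colsof k B))"
  unfolding mfac_def
proof (intro conjI ballI allI)
  fix c i assume "c \<in># mset (colsof k B)"
  then show "0 \<le> c i" using assms by (auto simp: set_colsof nonneg_factor_def)
next
  fix i i'
  have "A $ i $ i' = (\<Sum>j<k. (\<lambda>c. c i * c i') (\<lambda>i. B i j))"
    using assms by (simp add: nonneg_factor_def)
  also have "\<dots> = sum_list (map (\<lambda>c. c i * c i') (colsof k B))" by (rule sum_colsof)
  also have "\<dots> = (\<Sum>c\<in>#mset (colsof k B). c i * c i')"
    by (simp only: mset_map[symmetric] sum_mset_sum_list)
  finally show "A $ i $ i' = (\<Sum>c\<in>#mset (colsof k B). c i * c i')" .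
qed

lemma rank_le:
  assumes "cpset A S"
  shows "cp_rank A \<le> card S"
proof -
  obtain B where "cp_factorization A (card S) B" using L2[OF assms] by blast
  then have "nonneg_factor A (card S) B" by (simp add: cp_factorization_def)
  then show ?thesis unfolding cp_rank_def by (intro Least_le) blast
qed

lemma exists_min:
  assumes "completely_positive A"
  shows "\<exists>S. cpset A S \<and> card S = cp_rank A"
proof -
  have "\<exists>B. nonneg_factor A (cp_rank A) B"
    using assms unfolding completely_positive_def cp_rank_def
    by (rule LeastI_ex[of "\<lambda>k. Ex (nonneg_factor A k)"])
  then obtain B where "nonneg_factor A (cp_rank A) B" by blast
  from merge[OF mfac_of_nonneg[OF this]] obtain S where "cpset A S" "card S \<le> cp_rank A" by auto
  then show ?thesis using rank_le[of A S] by (intro exI[of _ S]) auto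
qed

lemma U1:
  "unique_cp_factorization A \<longleftrightarrow> (\<exists>S. cpset A S) \<and> (\<forall>S T. cpset A S \<longrightarrow> cpset A T \<longrightarrow> S = T)"
proof
  assume u: "unique_cp_factorization A"
  show "(\<exists>S. cpset A S) \<and> (\<forall>S T. cpset A S \<longrightarrow> cpset A T \<longrightarrow> S = T)"
  proof (intro conjI allI impI)
    obtain k B where "cp_factorization A k B" using u unfolding unique_cp_factorization_def by auto
    then show "\<exists>S. cpset A S" using L1 by blast
  next
    fix S T assume S: "cpset A S" and T: "cpset A T"
    obtain B where B: "cp_factorization A (card S) B" "set (colsof (card S) B) = S"
      using L2[OF S] by blast
    obtain C where C: "cp_factorization A (card T) C" "set (colsof (card T) C) = T"
      using L2[OF T] by blast
    have "same_factorization (card S) B (card T) C"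
      using u B(1) C(1) unfolding unique_cp_factorization_def by blast
    then show "S = T" using L3[OF B(1) C(1)] B(2) C(2) by simp
  qed
next
  assume r: "(\<exists>S. cpset A S) \<and> (\<forall>S T. cpset A S \<longrightarrow> cpset A T \<longrightarrow> S = T)"
  show "unique_cp_factorization A"
    unfolding unique_cp_factorization_def
  proof (intro conjI allI impI)
    obtain S where "cpset A S" using r by blast
    then show "\<exists>k B. cp_factorization A k B" using L2[of A S] by auto
  next
    fix k B k' C assume "cp_factorization A k B \<and> cp_factorization A k' C"
    then have B: "cp_factorization A k B" and C: "cp_factorization A k' C" by auto
    have "set (colsof k B) = set (colsof k' C)" using L1[OF B] L1[OF C] r by blast
    then show "same_factorization k B k' C" using L3[OF B C] by simp
  qed
qed

lemma U2:
  "unique_minimal_cp_factorization A \<longleftrightarrow> (\<exists>S. cpset A S \<and> card S = cp_rank A) \<and>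
     (\<forall>S T. cpset A S \<longrightarrow> card S = cp_rank A \<longrightarrow> cpset A T \<longrightarrow> card T = cp_rank A \<longrightarrow> S = T)"
proof
  assume u: "unique_minimal_cp_factorization A"
  show "(\<exists>S. cpset A S \<and> card S = cp_rank A) \<and>
     (\<forall>S T. cpset A S \<longrightarrow> card S = cp_rank A \<longrightarrow> cpset A T \<longrightarrow> card T = cp_rank A \<longrightarrow> S = T)"
  proof (intro conjI allI impI)
    obtain k B where "minimal_cp_factorization A k B" using u unfolding unique_minimal_cp_factorization_def by auto
    then have "cp_factorization A k B" "k = cp_rank A" unfolding minimal_cp_factorization_def by auto
    then show "\<exists>S. cpset A S \<and> card S = cp_rank A" using L1 L1card by blast
  next
    fix S T assume S: "cpset A S" and T: "cpset A T" and "card S = cp_rank A" "card T = cp_rank A"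
    obtain B where B: "cp_factorization A (card S) B" "set (colsof (card S) B) = S"
      using L2[OF S] by blast
    obtain C where C: "cp_factorization A (card T) C" "set (colsof (card T) C) = T"
      using L2[OF T] by blast
    have "same_factorization (card S) B (card T) C"
      using u B(1) C(1) \<open>card S = _\<close> \<open>card T = _\<close>
      unfolding unique_minimal_cp_factorization_def minimal_cp_factorization_def by blast
    then show "S = T" using L3[OF B(1) C(1)] B(2) C(2) by simp
  qed
next
  assume r: "(\<exists>S. cpset A S \<and> card S = cp_rank A) \<and>
     (\<forall>S T. cpset A S \<longrightarrow> card S = cp_rank A \<longrightarrow> cpset A T \<longrightarrow> card T = cp_rank A \<longrightarrow> S = T)"
  show "unique_minimal_cp_factorization A"
    unfolding unique_minimal_cp_factorization_def minimal_cp_factorization_def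
  proof (intro conjI allI impI)
    obtain S where "cpset A S" "card S = cp_rank A" using r by blast
    then show "\<exists>k B. cp_factorization A k B \<and> k = cp_rank A" using L2[of A S] by auto
  next
    fix k B k' C assume "(cp_factorization A k B \<and> k = cp_rank A) \<and> cp_factorization A k' C \<and> k' = cp_rank A"
    then have B: "cp_factorization A k B" and C: "cp_factorization A k' C" and
      kk: "k = cp_rank A" "k' = cp_rank A" by auto
    have "set (colsof k B) = set (colsof k' C)"
      using L1[OF B] L1[OF C] L1card[OF B] L1card[OF C] r kk by blast
    then show "same_factorization k B k' C" using L3[OF B C] by simp
  qed
qed


lemma sum2:
  fixes g :: "'n::finite \<Rightarrow> real"
  assumes "p \<noteq> q" "\<forall>l. l \<noteq> p \<and> l \<noteq> q \<longrightarrow> g l = 0"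
  shows "(\<Sum>l\<in>UNIV. g l) = g p + g q"
proof -
  have "(\<Sum>l\<in>UNIV. g l) = (\<Sum>l\<in>{p,q}. g l)"
    using assms(2) by (intro sum.mono_neutral_right) auto
  also have "\<dots> = g p + g q" using assms(1) by simp
  finally show ?thesis .
qed

locale tf =
  fixes A :: "real^'n^'n"
  assumes card2: "CARD('n) \<ge> 2"
    and irr: "irreducible_mat A"
    and tri: "triangle_free_graph A"
begin

lemma other_vertex: "\<exists>j::'n. j \<noteq> i"
proof (rule ccontr)
  assume "\<not> (\<exists>j::'n. j \<noteq> i)"
  then have "(UNIV::'n set) = {i}" by auto
  then have "card (UNIV::'n set) = card {i}" by (rule arg_cong)
  then show False using card2 by simp
qed

lemma exists_edge: "\<exists>j. graph_edge A i j"
proof -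
  obtain j where "j \<noteq> i" using other_vertex by blast
  have "(graph_edge A)\<^sup>*\<^sup>* i j" using irr by (simp add: irreducible_mat_def)
  then show ?thesis using \<open>j \<noteq> i\<close> by (cases rule: converse_rtranclpE) auto
qed

context
  fixes S assumes S: "cpset A S"
begin

lemma finS: "finite S" using S by (simp add: cpset_def)
lemma nnS: "c \<in> S \<Longrightarrow> 0 \<le> c i" using S by (simp add: cpset_def)
lemma indS: "c \<in> S \<Longrightarrow> d \<in> S \<Longrightarrow> c \<noteq> d \<Longrightarrow> \<not> vdep c d" using S by (simp add: cpset_def)
lemma AS: "A $ i $ i' = (\<Sum>c\<in>S. c i * c i')" using S by (simp add: cpset_def)

lemma A_nn: "0 \<le> A $ i $ j"
  unfolding AS by (intro sum_nonneg) (simp add: nnS)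

lemma A_sym: "A $ i $ j = A $ j $ i"
  unfolding AS by (simp add: mult.commute)

lemma fac_ge: "c \<in> S \<Longrightarrow> c i * c j \<le> A $ i $ j"
  unfolding AS by (rule member_le_sum) (auto simp: nnS finS)

lemma supp_edge: "c \<in> S \<Longrightarrow> i \<noteq> j \<Longrightarrow> c i > 0 \<Longrightarrow> c j > 0 \<Longrightarrow> graph_edge A i j"
proof -
  assume a: "c \<in> S" "i \<noteq> j" "c i > 0" "c j > 0"
  have "0 < c i * c j" using a by simp
  then have "0 < A $ i $ j" using fac_ge[OF a(1), of i j] by linarith
  then show ?thesis using a unfolding graph_edge_def by simp
qed

lemma edge_supp:
  assumes "c \<in> S" "i \<noteq> j" "c i > 0" "c j > 0" "l \<noteq> i" "l \<noteq> j"
  shows "c l = 0"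
proof (rule ccontr)
  assume "c l \<noteq> 0"
  then have "c l > 0" using nnS[OF assms(1), of l] by simp
  then have "graph_edge A i j" "graph_edge A j l" "graph_edge A i l"
    using supp_edge assms by auto
  then show False using tri unfolding triangle_free_graph_def by blast
qed

lemma edge_col:
  assumes "graph_edge A i j"
  shows "\<exists>c\<in>S. c i > 0 \<and> c j > 0"
proof -
  have "(\<Sum>c\<in>S. c i * c j) \<noteq> 0" using assms AS unfolding graph_edge_def by simp
  then obtain c where "c \<in> S" "c i * c j \<noteq> 0" by (rule sum.not_neutral_contains_not_neutral)
  then show ?thesis using nnS[of c i] nnS[of c j] by (intro bexI[of _ c]) (auto simp: less_le)
qed

lemma nonzero:
  assumes "c \<in> S"
  shows "\<exists>i. c i > 0"
proof (rule ccontr)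
  assume "\<not> (\<exists>i. c i > 0)"
  then have c0: "\<forall>i. c i = 0"
  proof (intro allI)
    fix i assume "\<not> (\<exists>i. c i > 0)"
    then have "\<not> c i > 0" by blast
    then show "c i = 0" using nnS[OF assms, of i] by linarith
  qed
  obtain i :: 'n where True by blast
  obtain j where e: "graph_edge A i j" using exists_edge by blast
  obtain d where d: "d \<in> S" "d i > 0" "d j > 0" using edge_col[OF e] by blast
  then have "d \<noteq> c" using c0 by auto
  moreover have "vdep c d" unfolding vdep_def using c0 by (intro exI[of _ 1] exI[of _ 0]) simp
  ultimately show False using indS[OF assms d(1)] by simp
qed

lemma supp2:
  assumes "c \<in> S"
  shows "\<exists>p q. p \<noteq> q \<and> c p > 0 \<and> (\<forall>l. l \<noteq> p \<and> l \<noteq> q \<longrightarrow> c l = 0)"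
proof -
  obtain p where p: "c p > 0" using nonzero[OF assms] by blast
  show ?thesis
  proof (cases "\<exists>q. q \<noteq> p \<and> c q > 0")
    case True
    then obtain q where q: "q \<noteq> p" "c q > 0" by blast
    have "\<forall>l. l \<noteq> p \<and> l \<noteq> q \<longrightarrow> c l = 0"
    proof (intro allI impI)
      fix l assume l: "l \<noteq> p \<and> l \<noteq> q"
      show "c l = 0" by (rule edge_supp[OF assms _ p q(2)]) (use q(1) l in auto)
    qed
    then show ?thesis using p q(1) by (intro exI[of _ p] exI[of _ q]) simp
  next
    case False
    obtain q where q: "q \<noteq> p" using other_vertex by blast
    have "\<forall>l. l \<noteq> p \<and> l \<noteq> q \<longrightarrow> c l = 0"
    proof (intro allI impI)
      fix l assume "l \<noteq> p \<and> l \<noteq> q"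
      then have "\<not> c l > 0" using False by blast
      then show "c l = 0" using nnS[OF assms, of l] by linarith
    qed
    then show ?thesis using p q by (intro exI[of _ p] exI[of _ q]) simp
  qed
qed

end
end


definition Term :: "('n::finite \<Rightarrow> real) \<Rightarrow> ('n \<Rightarrow> real) \<Rightarrow> real" where
  "Term c y = 2 * (\<Sum>i\<in>UNIV. (c i)^2 * (y i)^2) - (\<Sum>i\<in>UNIV. c i * y i)^2"

lemma Term2:
  fixes c :: "'n::finite \<Rightarrow> real"
  assumes "p \<noteq> q" "\<forall>l. l \<noteq> p \<and> l \<noteq> q \<longrightarrow> c l = 0"
  shows "Term c y = (c p * y p - c q * y q)^2"
proof -
  have "(\<Sum>i\<in>UNIV. (c i)^2 * (y i)^2) = (c p)^2 * (y p)^2 + (c q)^2 * (y q)^2"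
    by (rule sum2[OF assms(1)]) (use assms(2) in auto)
  moreover have "(\<Sum>i\<in>UNIV. c i * y i) = c p * y p + c q * y q"
    by (rule sum2[OF assms(1)]) (use assms(2) in auto)
  ultimately show ?thesis unfolding Term_def by (simp add: power2_eq_square algebra_simps)
qed

context tf
begin

definition mv :: "('n \<Rightarrow> real) \<Rightarrow> 'n \<Rightarrow> real" where
  "mv y i = 2 * A $ i $ i * y i - (\<Sum>j\<in>UNIV. A $ i $ j * y j)"

definition wv :: "('n \<Rightarrow> real) \<Rightarrow> 'n \<Rightarrow> 'n \<Rightarrow> 'n \<Rightarrow> real" where
  "wv z p q l = (if l = p then sqrt (A $ p $ q * z q / z p) else if l = q then sqrt (A $ p $ q * z p / z q) else 0)"

lemma mv_neg: "mv (\<lambda>i. - y i) i = - mv y i"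
  by (simp add: mv_def sum_negf)

context
  fixes S assumes S: "cpset A S"
begin

lemma Mv: "(comparison_matrix A *v y) $ i = mv (\<lambda>j. y $ j) i"
proof -
  have "(comparison_matrix A *v y) $ i = (\<Sum>j\<in>UNIV. (if i = j then A $ i $ i else - A $ i $ j) * y $ j)"
    unfolding matrix_vector_mult_def comparison_matrix_def
    by (simp only: abs_of_nonneg[OF A_nn[OF S]]) simp
  also have "\<dots> = (\<Sum>j\<in>UNIV. (if i = j then 2 * A $ i $ i * y $ j else 0) - A $ i $ j * y $ j)"
    by (intro sum.cong) auto
  also have "\<dots> = 2 * A $ i $ i * y $ i - (\<Sum>j\<in>UNIV. A $ i $ j * y $ j)"
    by (simp add: sum_subtractf)
  finally show ?thesis by (simp add: mv_def)
qed

lemma quad: "(\<Sum>i\<in>UNIV. y i * mv y i) = (\<Sum>c\<in>S. Term c y)"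
proof -
  have "(\<Sum>i\<in>UNIV. y i * mv y i) =
      (\<Sum>i\<in>UNIV. 2 * (A $ i $ i * (y i)^2)) - (\<Sum>i\<in>UNIV. \<Sum>j\<in>UNIV. y i * A $ i $ j * y j)"
    by (simp add: mv_def sum_subtractf right_diff_distrib sum_distrib_left power2_eq_square algebra_simps)
  also have "(\<Sum>i\<in>UNIV. 2 * (A $ i $ i * (y i)^2)) = (\<Sum>c\<in>S. 2 * (\<Sum>i\<in>UNIV. (c i)^2 * (y i)^2))"
    unfolding AS[OF S] by (simp add: sum_distrib_left sum_distrib_right power2_eq_square algebra_simps sum.swap[of _ UNIV])
  also have "(\<Sum>i\<in>UNIV. \<Sum>j\<in>UNIV. y i * A $ i $ j * y j) = (\<Sum>c\<in>S. (\<Sum>i\<in>UNIV. c i * y i)^2)"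
  proof -
    have "(\<Sum>i\<in>UNIV. \<Sum>j\<in>UNIV. y i * A $ i $ j * y j) = (\<Sum>i\<in>UNIV. \<Sum>j\<in>UNIV. \<Sum>c\<in>S. (c i * y i) * (c j * y j))"
      unfolding AS[OF S] by (simp add: sum_distrib_left sum_distrib_right algebra_simps)
    also have "\<dots> = (\<Sum>c\<in>S. \<Sum>i\<in>UNIV. \<Sum>j\<in>UNIV. (c i * y i) * (c j * y j))"
      by (simp add: sum.swap[of _ S])
    also have "\<dots> = (\<Sum>c\<in>S. (\<Sum>i\<in>UNIV. c i * y i)^2)"
      by (simp add: power2_eq_square sum_product)
    finally show ?thesis .
  qed
  finally show ?thesis by (simp add: Term_def sum_subtractf)
qed

lemma Term_nonneg:
  assumes "c \<in> S" shows "0 \<le> Term c y"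
proof -
  obtain p q where pq: "p \<noteq> q" "\<forall>l. l \<noteq> p \<and> l \<noteq> q \<longrightarrow> c l = 0"
    using supp2[OF S assms] by blast
  show ?thesis using Term2[OF pq, of y] by simp
qed

lemma Term_zero:
  assumes "\<forall>i. mv y i = 0" "c \<in> S"
  shows "Term c y = 0"
proof -
  have "(\<Sum>c\<in>S. Term c y) = 0" using quad[of y] assms(1) by simp
  moreover have "\<forall>c\<in>S. 0 \<le> Term c y" using Term_nonneg by blast
  ultimately have "\<forall>c\<in>S. Term c y = 0" by (simp add: sum_nonneg_eq_0_iff[OF finS[OF S]])
  then show ?thesis using assms(2) by blast
qed

lemma eq_edge:
  assumes "\<forall>i. mv y i = 0" "c \<in> S" "i \<noteq> j" "c i > 0" "c j > 0"
  shows "c i * y i = c j * y j"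
proof -
  have "\<forall>l. l \<noteq> i \<and> l \<noteq> j \<longrightarrow> c l = 0" using edge_supp[OF S assms(2,3,4,5)] by simp
  then have "Term c y = (c i * y i - c j * y j)^2" by (rule Term2[OF assms(3)])
  then show ?thesis using Term_zero[OF assms(1,2)] by simp
qed

lemma sign_edge:
  assumes "\<forall>i. mv y i = 0" "graph_edge A i j"
  shows "(0 < y i \<longleftrightarrow> 0 < y j) \<and> (y i < 0 \<longleftrightarrow> y j < 0)"
proof -
  obtain c where c: "c \<in> S" "c i > 0" "c j > 0" using edge_col[OF S assms(2)] by blast
  have "i \<noteq> j" using assms(2) by (simp add: graph_edge_def)
  have e: "c i * y i = c j * y j" using eq_edge[OF assms(1) c(1) \<open>i \<noteq> j\<close> c(2,3)] .
  have "0 < y i \<longleftrightarrow> 0 < c i * y i" using c(2) by (simp add: zero_less_mult_iff)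
  moreover have "0 < y j \<longleftrightarrow> 0 < c j * y j" using c(3) by (simp add: zero_less_mult_iff)
  moreover have "y i < 0 \<longleftrightarrow> c i * y i < 0" using c(2) by (simp add: mult_less_0_iff)
  moreover have "y j < 0 \<longleftrightarrow> c j * y j < 0" using c(3) by (simp add: mult_less_0_iff)
  ultimately show ?thesis using e by simp
qed

lemma sign_all:
  assumes "\<forall>i. mv y i = 0"
  shows "(0 < y r \<longleftrightarrow> 0 < y v) \<and> (y r < 0 \<longleftrightarrow> y v < 0)"
proof -
  have "(graph_edge A)\<^sup>*\<^sup>* r v" using irr by (simp add: irreducible_mat_def)
  then show ?thesis
  proof (induction rule: rtranclp_induct)
    case base then show ?case by simp
  next
    case (step v u)
    then show ?case using sign_edge[OF assms step(2)] by blast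
  qed
qed

lemma pos_kernel:
  assumes "\<not> invertible (comparison_matrix A)"
  shows "\<exists>z. (\<forall>i. 0 < z i) \<and> (\<forall>i. mv z i = 0)"
proof -
  obtain y where y: "comparison_matrix A *v y = 0" "y \<noteq> 0"
    using assms unfolding invertible_left_inverse matrix_left_invertible_ker by blast
  define Y where "Y = (\<lambda>j. y $ j)"
  have mY: "\<forall>i. mv Y i = 0" using y(1) Mv unfolding Y_def by (metis zero_index)
  obtain r where r: "Y r \<noteq> 0" using y(2) unfolding Y_def by (metis vec_eq_iff zero_index)
  show ?thesis
  proof (cases "0 < Y r")
    case True
    then show ?thesis using sign_all[OF mY, of r] mY by blast
  next
    case False
    then have "Y r < 0" using r by simp
    then have "\<forall>i. 0 < - Y i" using sign_all[OF mY, of r] by (meson neg_0_less_iff_less)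
    moreover have "\<forall>i. mv (\<lambda>i. - Y i) i = 0" using mY mv_neg by simp
    ultimately show ?thesis by (intro exI[of _ "\<lambda>i. - Y i"]) simp
  qed
qed

context
  fixes z assumes zpos: "\<forall>i. 0 < z i" and zker: "\<forall>i. mv z i = 0"
begin

lemma col_unique_sing:
  assumes "c \<in> S" "d \<in> S" "p \<noteq> q" "c p > 0" "c q > 0" "d p > 0" "d q > 0"
  shows "c = d"
proof (rule ccontr)
  assume "c \<noteq> d"
  have ec: "c p * z p = c q * z q" by (rule eq_edge[OF zker assms(1,3,4,5)])
  have ed: "d p * z p = d q * z q" by (rule eq_edge[OF zker assms(2,3,6,7)])
  have all: "\<forall>l. d p * c l + - c p * d l = 0"
  proof
    fix l
    show "d p * c l + - c p * d l = 0"
    proof (cases "l = p \<or> l = q")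
      case True
      have zq: "z q > 0" using zpos by simp
      have "d p * c q * z q = d p * (c q * z q)" by simp
      also have "\<dots> = d p * (c p * z p)" using ec by simp
      also have "\<dots> = c p * (d p * z p)" by simp
      also have "\<dots> = c p * (d q * z q)" using ed by simp
      finally have "d p * c q * z q = c p * d q * z q" by simp
      then have "d p * c q = c p * d q" using zq by simp
      then show ?thesis using True by auto
    next
      case False
      then show ?thesis using edge_supp[OF S assms(1,3,4,5), of l] edge_supp[OF S assms(2,3,6,7), of l] by simp
    qed
  qed
  have "vdep c d" unfolding vdep_def
    by (rule exI[of _ "d p"], rule exI[of _ "- c p"]) (use all assms(6) in simp)
  then show False using indS[OF S assms(1,2) \<open>c \<noteq> d\<close>] by simp
qed

lemma K:
  assumes "c \<in> S" "p \<noteq> q" "c p > 0" "c q > 0"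
  shows "c = wv z p q"
proof -
  have ec: "c p * z p = c q * z q" by (rule eq_edge[OF zker assms])
  have "A $ p $ q = (\<Sum>d\<in>S. d p * d q)" by (rule AS[OF S])
  also have "\<dots> = c p * c q + (\<Sum>d\<in>S - {c}. d p * d q)"
    using assms(1) finS[OF S] by (simp add: sum.remove)
  also have "(\<Sum>d\<in>S - {c}. d p * d q) = 0"
  proof (intro sum.neutral ballI)
    fix d assume d: "d \<in> S - {c}"
    show "d p * d q = 0"
    proof (rule ccontr)
      assume "d p * d q \<noteq> 0"
      then have "d p > 0" "d q > 0" using nnS[OF S, of d p] nnS[OF S, of d q] d by (auto simp: less_le)
      then have "c = d" using col_unique_sing[OF assms(1) _ assms(2,3,4)] d by blast
      then show False using d by simp
    qed
  qed
  finally have apq: "A $ p $ q = c p * c q" by simp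
  have zp: "z p > 0" and zq: "z q > 0" using zpos by auto
  have "(c p)^2 * z p = A $ p $ q * z q" using apq ec by (simp add: power2_eq_square algebra_simps)
  then have cp2: "(c p)^2 = A $ p $ q * z q / z p" using zp by (simp add: field_simps)
  have "(c q)^2 * z q = A $ p $ q * z p" using apq ec by (simp add: power2_eq_square algebra_simps)
  then have cq2: "(c q)^2 = A $ p $ q * z p / z q" using zq by (simp add: field_simps)
  have "c p = sqrt (A $ p $ q * z q / z p)" using cp2 assms(3) by (metis abs_of_pos real_sqrt_abs)
  moreover have "c q = sqrt (A $ p $ q * z p / z q)" using cq2 assms(4) by (metis abs_of_pos real_sqrt_abs)
  moreover have "\<forall>l. l \<noteq> p \<and> l \<noteq> q \<longrightarrow> c l = 0" using edge_supp[OF S assms] by simp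
  ultimately show ?thesis unfolding wv_def using assms(2) by (auto simp: fun_eq_iff)
qed

lemma K2:
  assumes "c \<in> S"
  shows "\<exists>p q. p \<noteq> q \<and> c p > 0 \<and> c q > 0"
proof -
  obtain p q where pq: "p \<noteq> q" "c p > 0" "\<forall>l. l \<noteq> p \<and> l \<noteq> q \<longrightarrow> c l = 0"
    using supp2[OF S assms] by blast
  have "c q > 0"
  proof (rule ccontr)
    assume "\<not> c q > 0"
    then have "c q = 0" using nnS[OF S assms, of q] by simp
    then have "Term c z = (c p * z p)^2" using Term2[OF pq(1,3)] by simp
    then have "c p * z p = 0" using Term_zero[OF zker assms] by simp
    then show False using pq(2) zpos by (metis mult_pos_pos less_irrefl)
  qed
  then show ?thesis using pq by blast
qed

lemma S_eq_W: "S = {wv z p q | p q. graph_edge A p q}"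
proof
  show "S \<subseteq> {wv z p q | p q. graph_edge A p q}"
  proof
    fix c assume c: "c \<in> S"
    obtain p q where "p \<noteq> q" "c p > 0" "c q > 0" using K2[OF c] by blast
    then show "c \<in> {wv z p q | p q. graph_edge A p q}"
      using K[OF c] supp_edge[OF S c] by blast
  qed
next
  show "{wv z p q | p q. graph_edge A p q} \<subseteq> S"
  proof
    fix w assume "w \<in> {wv z p q | p q. graph_edge A p q}"
    then obtain p q where w: "w = wv z p q" "graph_edge A p q" by blast
    obtain c where c: "c \<in> S" "c p > 0" "c q > 0" using edge_col[OF S w(2)] by blast
    have "p \<noteq> q" using w(2) by (simp add: graph_edge_def)
    then have "c = w" using K[OF c(1) _ c(2,3)] w(1) by simp
    then show "w \<in> S" using c(1) by simp
  qed
qed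

end
end

theorem a_imp_b:
  assumes "\<not> invertible (comparison_matrix A)" "cpset A S0" "cpset A S" "cpset A T"
  shows "S = T"
proof -
  obtain z where z: "\<forall>i. 0 < z i" "\<forall>i. mv z i = 0" using pos_kernel[OF assms(2,1)] by blast
  show ?thesis using S_eq_W[OF assms(3) z] S_eq_W[OF assms(4) z] by simp
qed

end


definition minor :: "('n \<Rightarrow> real) \<Rightarrow> ('n \<Rightarrow> real) \<Rightarrow> 'n \<Rightarrow> 'n \<Rightarrow> real" where
  "minor u w i i' = u i * w i' - u i' * w i"

lemma vdep_minor: "vdep u w \<longleftrightarrow> (\<forall>i i'. minor u w i i' = 0)"
proof
  assume "vdep u w"
  then obtain a b where ab: "a \<noteq> 0 \<or> b \<noteq> 0" "\<forall>i. a * u i + b * w i = 0" unfolding vdep_def by blast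
  show "\<forall>i i'. minor u w i i' = 0"
  proof (cases "b = 0")
    case True
    then have "\<forall>i. u i = 0" using ab by auto
    then show ?thesis by (simp add: minor_def)
  next
    case False
    have "\<forall>i. w i = - (a / b) * u i"
    proof
      fix i have "a * u i + b * w i = 0" using ab by blast
      then show "w i = - (a / b) * u i" using False by (simp add: field_simps)
    qed
    then show ?thesis by (simp add: minor_def algebra_simps)
  qed
next
  assume m: "\<forall>i i'. minor u w i i' = 0"
  show "vdep u w"
  proof (cases "\<forall>i. u i = 0")
    case True
    then show ?thesis unfolding vdep_def by (intro exI[of _ 1] exI[of _ 0]) simp
  next
    case False
    then obtain k where k: "u k \<noteq> 0" by blast
    have "\<forall>i. w k * u i + - u k * w i = 0"
    proof
      fix i have "minor u w i k = 0" using m by blast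
      then show "w k * u i + - u k * w i = 0" by (simp add: minor_def algebra_simps)
    qed
    then show ?thesis unfolding vdep_def using k by (intro exI[of _ "w k"] exI[of _ "- u k"]) simp
  qed
qed

lemma minor_nz: "minor u w i j \<noteq> 0 \<Longrightarrow> \<not> vdep u w"
  unfolding vdep_minor by blast

lemma minor_self: "minor u u i j = 0"
  by (simp add: minor_def mult.commute)

lemma rot_minor:
  fixes ca sa x1 x2 y1 y2 :: real
  shows "(ca * x1 + sa * y1) * (ca * y2 + sa * (- x2)) - (ca * x2 + sa * y2) * (ca * y1 + sa * (- x1))
    = (ca^2 + sa^2) * (x1 * y2 - x2 * y1)"
  by (simp add: algebra_simps power2_eq_square)

lemma rot_outer:
  fixes ca sa x1 x2 y1 y2 :: real
  shows "(ca * x1 + sa * y1) * (ca * x2 + sa * y2) + (ca * y1 + sa * (- x1)) * (ca * y2 + sa * (- x2))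
    = (ca^2 + sa^2) * (x1 * x2 + y1 * y2)"
  by (simp add: algebra_simps power2_eq_square)

lemma vdep_sym: "vdep u w \<Longrightarrow> vdep w u"
proof -
  assume "vdep u w"
  then obtain a b where "a \<noteq> 0 \<or> b \<noteq> 0" "\<forall>i. a * u i + b * w i = 0" unfolding vdep_def by blast
  then have "(b \<noteq> 0 \<or> a \<noteq> 0) \<and> (\<forall>i. b * w i + a * u i = 0)" by (auto simp: add.commute)
  then show "vdep w u" unfolding vdep_def by blast
qed

lemma ev_lin: "((\<lambda>\<theta>::real. cos \<theta> * a + sin \<theta> * b) \<longlongrightarrow> a) (at_right 0)"
proof -
  have "((\<lambda>\<theta>::real. cos \<theta> * a + sin \<theta> * b) \<longlongrightarrow> cos 0 * a + sin 0 * b) (at_right 0)"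
    by (intro tendsto_intros)
  then show ?thesis by simp
qed

lemma ev_ne: "a \<noteq> 0 \<Longrightarrow> eventually (\<lambda>\<theta>::real. cos \<theta> * a + sin \<theta> * b \<noteq> 0) (at_right 0)"
  using tendsto_imp_eventually_ne[OF ev_lin] by blast

lemma ev_pos: "a > 0 \<Longrightarrow> eventually (\<lambda>\<theta>::real. cos \<theta> * a + sin \<theta> * b > 0) (at_right 0)"
  using order_tendstoD(1)[OF ev_lin] by blast

lemma rotation:
  fixes S :: "('n::finite \<Rightarrow> real) set"
  assumes S: "cpset A S" and cd: "c \<in> S" "d \<in> S" "c \<noteq> d" and sub: "\<forall>i. c i > 0 \<longrightarrow> d i > 0"
  shows "\<exists>T. cpset A T \<and> card T = card S \<and> T \<noteq> S"
proof -
  have fin: "finite S" and nn: "\<forall>e\<in>S. \<forall>i. 0 \<le> e i" and ind: "\<forall>e\<in>S. \<forall>f\<in>S. e \<noteq> f \<longrightarrow> \<not> vdep e f"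
    and AS: "\<forall>i i'. A $ i $ i' = (\<Sum>e\<in>S. e i * e i')"
    using S unfolding cpset_def by auto
  define R where "R = S - {c, d}"
  have finR: "finite R" using fin by (simp add: R_def)
  have indcd: "\<not> vdep c d" using ind cd by blast
  obtain i0 i0' where m0: "minor c d i0 i0' \<noteq> 0" using indcd vdep_minor by blast
  define C where "C \<theta> = (\<lambda>i. cos \<theta> * c i + sin \<theta> * d i)" for \<theta>
  define D where "D \<theta> = (\<lambda>i. cos \<theta> * d i + sin \<theta> * (- c i))" for \<theta>
  have e1: "eventually (\<lambda>\<theta>. \<forall>i\<in>UNIV. 0 \<le> D \<theta> i) (at_right 0)"
  proof (rule eventually_ball_finite, simp, intro ballI)
    fix i :: 'n
    show "eventually (\<lambda>\<theta>. 0 \<le> D \<theta> i) (at_right 0)"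
    proof (cases "d i > 0")
      case True
      then show ?thesis using ev_pos[OF True, of "- c i"] unfolding D_def
        by (auto elim: eventually_mono)
    next
      case False
      then have "d i = 0" "c i = 0" using nn cd sub by (metis less_le)+
      then show ?thesis by (simp add: D_def)
    qed
  qed
  have e2: "eventually (\<lambda>\<theta>. \<forall>e\<in>R. \<not> vdep (C \<theta>) e \<and> \<not> vdep (D \<theta>) e) (at_right 0)"
  proof (rule eventually_ball_finite[OF finR], intro ballI)
    fix e assume e: "e \<in> R"
    then have "e \<in> S" "e \<noteq> c" "e \<noteq> d" by (auto simp: R_def)
    then have "\<not> vdep c e" "\<not> vdep d e" using ind cd by auto
    then obtain i j k l where ij: "minor c e i j \<noteq> 0" and kl: "minor d e k l \<noteq> 0"
      using vdep_minor by blast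
    have mC: "minor (C \<theta>) e i j = cos \<theta> * minor c e i j + sin \<theta> * minor d e i j" for \<theta>
      by (simp add: minor_def C_def algebra_simps)
    have mD: "minor (D \<theta>) e k l = cos \<theta> * minor d e k l + sin \<theta> * (- minor c e k l)" for \<theta>
      by (simp add: minor_def D_def algebra_simps)
    have "eventually (\<lambda>\<theta>. minor (C \<theta>) e i j \<noteq> 0) (at_right 0)"
      unfolding mC by (rule ev_ne[OF ij])
    moreover have "eventually (\<lambda>\<theta>. minor (D \<theta>) e k l \<noteq> 0) (at_right 0)"
      unfolding mD by (rule ev_ne[OF kl])
    ultimately show "eventually (\<lambda>\<theta>. \<not> vdep (C \<theta>) e \<and> \<not> vdep (D \<theta>) e) (at_right 0)"
      by eventually_elim (auto simp: vdep_minor)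
  qed
  have e3: "eventually (\<lambda>\<theta>::real. 0 < \<theta> \<and> \<theta> < pi / 2) (at_right 0)"
  proof -
    have "eventually (\<lambda>\<theta>::real. \<theta> < pi / 2) (at_right 0)"
      using order_tendstoD(2)[OF tendsto_ident_at[of 0 "{0<..}"], of "pi/2"] by simp
    then show ?thesis using eventually_at_right_less[of 0] by eventually_elim auto
  qed
  have "eventually (\<lambda>\<theta>. (\<forall>i\<in>UNIV. 0 \<le> D \<theta> i) \<and> (\<forall>e\<in>R. \<not> vdep (C \<theta>) e \<and> \<not> vdep (D \<theta>) e)
     \<and> 0 < \<theta> \<and> \<theta> < pi / 2) (at_right 0)"
    using e1 e2 e3 by eventually_elim blast
  from eventually_happens'[OF trivial_limit_at_right_real this]
  obtain \<theta> where th0: "(\<forall>i\<in>UNIV. 0 \<le> D \<theta> i) \<and> (\<forall>e\<in>R. \<not> vdep (C \<theta>) e \<and> \<not> vdep (D \<theta>) e)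
     \<and> 0 < \<theta> \<and> \<theta> < pi / 2" by blast
  then have th: "\<forall>i. 0 \<le> D \<theta> i" "\<forall>e\<in>R. \<not> vdep (C \<theta>) e \<and> \<not> vdep (D \<theta>) e"
    "0 < \<theta>" "\<theta> < pi / 2" using th0 by blast+
  have cpos: "cos \<theta> > 0" using th(3,4) by (intro cos_gt_zero) auto
  have spos: "sin \<theta> > 0" using th(3,4) by (intro sin_gt_zero) auto
  define c' where "c' = C \<theta>"
  define d' where "d' = D \<theta>"
  have nnc': "\<forall>i. 0 \<le> c' i"
  proof
    fix i
    have "0 \<le> c i" "0 \<le> d i" using nn cd by auto
    then show "0 \<le> c' i" using cpos spos unfolding c'_def C_def by simp
  qed
  have nnd': "\<forall>i. 0 \<le> d' i" using th(1) by (simp add: d'_def)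
  have "\<not> vdep c' d'"
  proof -
    have "minor c' d' i0 i0' = ((cos \<theta>)^2 + (sin \<theta>)^2) * minor c d i0 i0'"
      unfolding minor_def c'_def d'_def C_def D_def by (rule rot_minor)
    then have "minor c' d' i0 i0' \<noteq> 0" using m0 by simp
    then show ?thesis by (rule minor_nz)
  qed
  have c'c: "c' \<noteq> c"
  proof
    assume "c' = c"
    have "minor c' c i0' i0 = sin \<theta> * minor c d i0 i0'"
      by (simp add: minor_def c'_def C_def algebra_simps)
    then have "minor c' c i0' i0 \<noteq> 0" using m0 spos by simp
    then show False using \<open>c' = c\<close> minor_self by metis
  qed
  have c'd: "c' \<noteq> d"
  proof
    assume "c' = d"
    have "minor c' d i0 i0' = cos \<theta> * minor c d i0 i0'"
      by (simp add: minor_def c'_def C_def algebra_simps)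
    then have "minor c' d i0 i0' \<noteq> 0" using m0 cpos by simp
    then show False using \<open>c' = d\<close> minor_self by metis
  qed
  have d'd: "d' \<noteq> d"
  proof
    assume "d' = d"
    have "minor d' d i0 i0' = - sin \<theta> * minor c d i0 i0'"
      by (simp add: minor_def d'_def D_def algebra_simps)
    then have "minor d' d i0 i0' \<noteq> 0" using m0 spos by simp
    then show False using \<open>d' = d\<close> minor_self by metis
  qed
  have d'c: "d' \<noteq> c"
  proof
    assume "d' = c"
    have "minor d' c i0 i0' = - cos \<theta> * minor c d i0 i0'"
      by (simp add: minor_def d'_def D_def algebra_simps)
    then have "minor d' c i0 i0' \<noteq> 0" using m0 cpos by simp
    then show False using \<open>d' = c\<close> minor_self by metis
  qed
  have c'R: "c' \<notin> R"
  proof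
    assume "c' \<in> R" then have "\<not> vdep c' c'" using th(2) unfolding c'_def by blast
    then show False using vdep_refl by blast
  qed
  have d'R: "d' \<notin> R"
  proof
    assume "d' \<in> R" then have "\<not> vdep d' d'" using th(2) unfolding d'_def by blast
    then show False using vdep_refl by blast
  qed
  have c'S: "c' \<notin> S" using c'R c'c c'd by (auto simp: R_def)
  have d'S: "d' \<notin> S" using d'R d'd d'c by (auto simp: R_def)
  have c'd': "c' \<noteq> d'"
  proof
    assume "c' = d'" then have "vdep c' d'" using vdep_refl by simp
    then show False using \<open>\<not> vdep c' d'\<close> by simp
  qed
  define T where "T = insert c' (insert d' R)"
  have outer: "c' i * c' i' + d' i * d' i' = c i * c i' + d i * d i'" for i i'
  proof -
    have "c' i * c' i' + d' i * d' i' = ((cos \<theta>)^2 + (sin \<theta>)^2) * (c i * c i' + d i * d i')"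
      unfolding c'_def d'_def C_def D_def by (rule rot_outer)
    then show ?thesis by simp
  qed
  have "cpset A T"
    unfolding cpset_def
  proof (intro conjI ballI allI impI)
    show "finite T" using finR by (simp add: T_def)
  next
    fix e i assume "e \<in> T"
    then have "e = c' \<or> e = d' \<or> e \<in> S" unfolding T_def R_def by blast
    then show "0 \<le> e i" using nnc' nnd' nn by blast
  next
    fix e f assume ef: "e \<in> T" "f \<in> T" "e \<noteq> f"
    have sym: "\<not> vdep u w \<Longrightarrow> \<not> vdep w u" for u w using vdep_sym[of w u] by auto
    have cR: "\<forall>g\<in>R. \<not> vdep c' g \<and> \<not> vdep g c' \<and> \<not> vdep d' g \<and> \<not> vdep g d'"
    proof
      fix g assume "g \<in> R"
      then have "\<not> vdep c' g" "\<not> vdep d' g" using th(2) unfolding c'_def d'_def by auto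
      then show "\<not> vdep c' g \<and> \<not> vdep g c' \<and> \<not> vdep d' g \<and> \<not> vdep g d'" using sym by auto
    qed
    have RR: "\<forall>g\<in>R. \<forall>h\<in>R. g \<noteq> h \<longrightarrow> \<not> vdep g h" using ind by (auto simp: R_def)
    have "\<not> vdep d' c'" using \<open>\<not> vdep c' d'\<close> sym by auto
    have eT: "e = c' \<or> e = d' \<or> e \<in> R" and fT: "f = c' \<or> f = d' \<or> f \<in> R" using ef unfolding T_def by auto
    show "\<not> vdep e f"
    proof (cases "e \<in> R")
      case eR: True
      show ?thesis
      proof (cases "f \<in> R")
        case True then show ?thesis using RR eR ef(3) by blast
      next
        case False then have "f = c' \<or> f = d'" using fT by blast
        then show ?thesis using cR eR by blast
      qed
    next
      case eR: False
      then have e2: "e = c' \<or> e = d'" using eT by blast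
      show ?thesis
      proof (cases "f \<in> R")
        case True then show ?thesis using cR e2 by blast
      next
        case False then have "f = c' \<or> f = d'" using fT by blast
        then show ?thesis using e2 ef(3) \<open>\<not> vdep c' d'\<close> \<open>\<not> vdep d' c'\<close> by blast
      qed
    qed
  next
    fix i i'
    have Sd: "S = insert c (insert d R)" using cd by (auto simp: R_def)
    have "A $ i $ i' = (\<Sum>e\<in>S. e i * e i')" using AS by blast
    also have "\<dots> = c i * c i' + (d i * d i' + (\<Sum>e\<in>R. e i * e i'))"
    proof -
      have "c \<notin> R" "d \<notin> R" by (auto simp: R_def)
      then show ?thesis unfolding Sd using finR cd(3) by simp
    qed
    also have "\<dots> = c' i * c' i' + (d' i * d' i' + (\<Sum>e\<in>R. e i * e i'))"
      using outer[of i i'] by simp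
    also have "\<dots> = (\<Sum>e\<in>T. e i * e i')"
      unfolding T_def using finR c'R d'R c'd' by simp
    finally show "A $ i $ i' = (\<Sum>e\<in>T. e i * e i')" .
  qed
  moreover have "card T = card S"
  proof -
    have "card T = card R + 2" unfolding T_def using finR c'R d'R c'd' by simp
    moreover have "card S = card R + 2"
    proof -
      have Sd: "S = insert c (insert d R)" using cd by (auto simp: R_def)
      have "c \<notin> R" "d \<notin> R" by (auto simp: R_def)
      then have "card (insert c (insert d R)) = card R + 2" using finR cd(3) by simp
      then show ?thesis using Sd by simp
    qed
    ultimately show ?thesis by simp
  qed
  moreover have "T \<noteq> S" using c'S by (auto simp: T_def)
  ultimately show ?thesis by blast
qed


locale walks =
  fixes E :: "'a \<Rightarrow> 'a \<Rightarrow> bool" and r :: "'a \<Rightarrow> 'a \<Rightarrow> real"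
  assumes Esym: "E i j \<Longrightarrow> E j i"
    and Eirr: "\<not> E i i"
    and rpos: "E i j \<Longrightarrow> r i j > 0"
    and rinv: "E i j \<Longrightarrow> r j i * r i j = 1"
begin

definition path :: "'a \<Rightarrow> 'a \<Rightarrow> nat \<Rightarrow> (nat \<Rightarrow> 'a) \<Rightarrow> bool" where
  "path a b m w \<longleftrightarrow> w 0 = a \<and> w m = b \<and> (\<forall>i<m. E (w i) (w (Suc i)))"

definition wprod :: "nat \<Rightarrow> (nat \<Rightarrow> 'a) \<Rightarrow> real" where
  "wprod m w = (\<Prod>i<m. r (w i) (w (Suc i)))"

definition cw :: "nat \<Rightarrow> (nat \<Rightarrow> 'a) \<Rightarrow> bool" where
  "cw m w \<longleftrightarrow> w m = w 0 \<and> (\<forall>i<m. E (w i) (w (Suc i)))"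

lemma wprod_pos: "(\<forall>i<m. E (w i) (w (Suc i))) \<Longrightarrow> wprod m w > 0"
  unfolding wprod_def by (intro prod_pos) (auto intro: rpos)

lemma wprod_split:
  assumes "k \<le> m"
  shows "wprod m w = wprod k w * (\<Prod>i\<in>{k..<m}. r (w i) (w (Suc i)))"
  unfolding wprod_def using prod.atLeastLessThan_concat[of 0 k m "\<lambda>i. r (w i) (w (Suc i))"] assms
  by (simp add: atLeast0LessThan)

lemma path_exists:
  assumes "E\<^sup>*\<^sup>* a b"
  shows "\<exists>m w. path a b m w"
  using assms
proof (induction rule: rtranclp_induct)
  case base
  then show ?case unfolding path_def by (intro exI[of _ 0] exI[of _ "\<lambda>_. a"]) simp
next
  case (step v u)
  then obtain m w where p: "path a v m w" by blast
  define w' where "w' = (\<lambda>i. if i \<le> m then w i else u)"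
  have "path a u (Suc m) w'"
    unfolding path_def
  proof (intro conjI allI impI)
    show "w' 0 = a" using p by (simp add: path_def w'_def)
    show "w' (Suc m) = u" by (simp add: w'_def)
  next
    fix i assume "i < Suc m"
    show "E (w' i) (w' (Suc i))"
    proof (cases "i < m")
      case True then show ?thesis using p by (simp add: path_def w'_def)
    next
      case False then have "i = m" using \<open>i < Suc m\<close> by simp
      then show ?thesis using p step(2) by (simp add: path_def w'_def)
    qed
  qed
  then show ?case by blast
qed

lemma path_extend:
  assumes "path a v m w" "E v u"
  shows "path a u (Suc m) (\<lambda>i. if i \<le> m then w i else u) \<and>
         wprod (Suc m) (\<lambda>i. if i \<le> m then w i else u) = wprod m w * r v u"
proof
  show "path a u (Suc m) (\<lambda>i. if i \<le> m then w i else u)"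
    unfolding path_def
  proof (intro conjI allI impI)
    show "(if 0 \<le> m then w 0 else u) = a" using assms by (simp add: path_def)
    show "(if Suc m \<le> m then w (Suc m) else u) = u" by simp
  next
    fix i assume "i < Suc m"
    show "E (if i \<le> m then w i else u) (if Suc i \<le> m then w (Suc i) else u)"
    proof (cases "i < m")
      case True then show ?thesis using assms by (simp add: path_def)
    next
      case False then have "i = m" using \<open>i < Suc m\<close> by simp
      then show ?thesis using assms by (simp add: path_def)
    qed
  qed
  have "wprod (Suc m) (\<lambda>i. if i \<le> m then w i else u) =
      (\<Prod>i<m. r (w i) (w (Suc i))) * r (w m) u"
    unfolding wprod_def by (simp add: lessThan_Suc)
  then show "wprod (Suc m) (\<lambda>i. if i \<le> m then w i else u) = wprod m w * r v u"
    using assms(1) by (simp add: path_def wprod_def)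
qed

lemma rev_prod:
  assumes "\<forall>i<m. E (w i) (w (Suc i))"
  shows "(\<Prod>i<m. r (w (m - i)) (w (m - Suc i))) * wprod m w = 1"
proof -
  have "(\<Prod>i<m. r (w (m - i)) (w (m - Suc i))) = (\<Prod>i<m. r (w (Suc i)) (w i))"
  proof -
    have "(\<Prod>i<m. r (w (m - i)) (w (m - Suc i))) = (\<Prod>i<m. (\<lambda>j. r (w (Suc j)) (w j)) (m - Suc i))"
      by (intro prod.cong) (auto simp: Suc_diff_Suc)
    also have "\<dots> = (\<Prod>i<m. r (w (Suc i)) (w i))" by (rule prod.nat_diff_reindex)
    finally show ?thesis .
  qed
  also have "\<dots> * wprod m w = (\<Prod>i<m. r (w (Suc i)) (w i) * r (w i) (w (Suc i)))"
    unfolding wprod_def by (simp add: prod.distrib)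
  also have "\<dots> = 1" using assms by (intro prod.neutral) (simp add: rinv)
  finally show ?thesis .
qed

lemma reverse_cw:
  assumes "cw m w"
  shows "cw m (\<lambda>i. w (m - i)) \<and> wprod m (\<lambda>i. w (m - i)) * wprod m w = 1"
proof
  show "cw m (\<lambda>i. w (m - i))"
    unfolding cw_def
  proof (intro conjI allI impI)
    show "w (m - m) = w (m - 0)" using assms by (simp add: cw_def)
  next
    fix i assume "i < m"
    then have "E (w (m - Suc i)) (w (Suc (m - Suc i)))" using assms by (simp add: cw_def)
    moreover have "Suc (m - Suc i) = m - i" using \<open>i < m\<close> by simp
    ultimately show "E (w (m - i)) (w (m - Suc i))" using Esym by simp
  qed
  show "wprod m (\<lambda>i. w (m - i)) * wprod m w = 1"
    using rev_prod[of m w] assms unfolding cw_def wprod_def by simp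
qed

lemma closed_of_paths:
  assumes p1: "path a v m1 w1" and p2: "path a v m2 w2"
  defines "w \<equiv> (\<lambda>i. if i \<le> m1 then w1 i else w2 (m1 + m2 - i))"
  shows "cw (m1 + m2) w \<and> wprod (m1 + m2) w * wprod m2 w2 = wprod m1 w1"
proof
  have e1: "\<forall>i<m1. E (w1 i) (w1 (Suc i))" and e2: "\<forall>i<m2. E (w2 i) (w2 (Suc i))"
    and ends: "w1 0 = a" "w1 m1 = v" "w2 0 = a" "w2 m2 = v"
    using p1 p2 by (auto simp: path_def)
  show "cw (m1 + m2) w"
    unfolding cw_def
  proof (intro conjI allI impI)
    show "w (m1 + m2) = w 0" using ends by (cases "m2 = 0") (auto simp: w_def)
  next
    fix i assume i: "i < m1 + m2"
    show "E (w i) (w (Suc i))"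
    proof (cases "i < m1")
      case True then show ?thesis using e1 by (simp add: w_def)
    next
      case False
      define k where "k = m1 + m2 - Suc i"
      have k: "k < m2" "m1 + m2 - i = Suc k" using False i by (auto simp: k_def)
      have "E (w2 (Suc k)) (w2 k)" using e2 k(1) Esym by blast
      moreover have "w i = w2 (Suc k)"
        using False k ends by (cases "i = m1") (auto simp: w_def)
      moreover have "w (Suc i) = w2 k" using False k by (simp add: w_def k_def)
      ultimately show ?thesis by simp
    qed
  qed
  have "wprod (m1 + m2) w = wprod m1 w * (\<Prod>i\<in>{m1..<m1+m2}. r (w i) (w (Suc i)))"
    by (rule wprod_split) simp
  also have "wprod m1 w = wprod m1 w1" unfolding wprod_def w_def by (intro prod.cong) auto
  also have "(\<Prod>i\<in>{m1..<m1+m2}. r (w i) (w (Suc i))) = (\<Prod>i<m2. r (w2 (m2 - i)) (w2 (m2 - Suc i)))"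
  proof -
    have "(\<Prod>i\<in>{m1..<m1+m2}. r (w i) (w (Suc i))) = (\<Prod>i\<in>{0..<m2}. r (w (m1 + i)) (w (Suc (m1 + i))))"
      using prod.atLeastLessThan_shift_0[of "\<lambda>i. r (w i) (w (Suc i))" m1 "m1+m2"] by (simp add: comp_def)
    also have "\<dots> = (\<Prod>i<m2. r (w2 (m2 - i)) (w2 (m2 - Suc i)))"
    proof (intro prod.cong)
      fix i assume "i \<in> {..<m2}"
      have "w (m1 + i) = w2 (m2 - i)" using ends by (cases "i = 0") (auto simp: w_def)
      moreover have "w (Suc (m1 + i)) = w2 (m2 - Suc i)" by (simp add: w_def)
      ultimately show "r (w (m1 + i)) (w (Suc (m1 + i))) = r (w2 (m2 - i)) (w2 (m2 - Suc i))" by simp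
    qed (simp add: atLeast0LessThan)
    finally show ?thesis .
  qed
  finally have "wprod (m1 + m2) w * wprod m2 w2 = wprod m1 w1 * ((\<Prod>i<m2. r (w2 (m2 - i)) (w2 (m2 - Suc i))) * wprod m2 w2)"
    by (simp add: mult.assoc)
  also have "\<dots> = wprod m1 w1" using rev_prod[OF e2] by simp
  finally show "wprod (m1 + m2) w * wprod m2 w2 = wprod m1 w1" .
qed

theorem potential:
  assumes conn: "\<forall>u v. E\<^sup>*\<^sup>* u v" and allone: "\<forall>m w. cw m w \<longrightarrow> wprod m w = 1"
  shows "\<exists>y. (\<forall>v. y v > 0) \<and> (\<forall>i j. E i j \<longrightarrow> y j = y i * r i j)"
proof -
  fix a :: 'a
  have ex: "\<exists>m w. path a v m w" for v using path_exists conn by blast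
  have wd: "path a v m1 w1 \<Longrightarrow> path a v m2 w2 \<Longrightarrow> wprod m1 w1 = wprod m2 w2" for v m1 w1 m2 w2
  proof -
    assume p1: "path a v m1 w1" and p2: "path a v m2 w2"
    from closed_of_paths[OF p1 p2] allone show ?thesis by force
  qed
  define y where "y v = wprod (fst (SOME p. path a v (fst p) (snd p))) (snd (SOME p. path a v (fst p) (snd p)))" for v
  have yp: "path a v m w \<Longrightarrow> y v = wprod m w" for v m w
  proof -
    assume pw: "path a v m w"
    have "\<exists>p. path a v (fst p) (snd p)" using pw by (intro exI[of _ "(m, w)"]) simp
    then have "path a v (fst (SOME p. path a v (fst p) (snd p))) (snd (SOME p. path a v (fst p) (snd p)))"
      by (rule someI_ex)
    then show "y v = wprod m w" unfolding y_def using wd pw by blast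
  qed
  show ?thesis
  proof (intro exI conjI allI impI)
    fix v
    obtain m w where p: "path a v m w" using ex by blast
    show "y v > 0" using yp[OF p] wprod_pos p by (simp add: path_def)
  next
    fix i j assume e: "E i j"
    obtain m w where p: "path a i m w" using ex by blast
    show "y j = y i * r i j"
      using path_extend[OF p e] yp p by metis
  qed
qed

lemma cw_split:
  assumes c: "cw m w" and ab: "a < b" "b \<le> m" "w a = w b"
  defines "wi \<equiv> (\<lambda>i. w (a + i))" and "wo \<equiv> (\<lambda>i. if i \<le> a then w i else w (i + (b - a)))"
  shows "cw (b - a) wi \<and> cw (m - (b - a)) wo \<and> wprod m w = wprod (b - a) wi * wprod (m - (b - a)) wo"
proof (intro conjI)
  have e: "\<forall>i<m. E (w i) (w (Suc i))" and cl: "w m = w 0" using c by (auto simp: cw_def)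
  show "cw (b - a) wi" unfolding cw_def wi_def using e ab by auto
  show "cw (m - (b - a)) wo"
    unfolding cw_def
  proof (intro conjI allI impI)
    show "wo (m - (b - a)) = wo 0"
      using ab cl by (cases "b = m") (auto simp: wo_def)
  next
    fix i assume i: "i < m - (b - a)"
    show "E (wo i) (wo (Suc i))"
    proof (cases "i < a")
      case True then show ?thesis using e ab by (simp add: wo_def)
    next
      case False
      then have "wo i = w (i + (b - a))" using ab by (cases "i = a") (auto simp: wo_def)
      moreover have "wo (Suc i) = w (Suc (i + (b - a)))" using False by (simp add: wo_def)
      moreover have "i + (b - a) < m" using i ab by simp
      ultimately show ?thesis using e by simp
    qed
  qed
  define f where "f i = r (w i) (w (Suc i))" for i
  have wm: "wprod m w = wprod a w * (\<Prod>i\<in>{a..<b}. f i) * (\<Prod>i\<in>{b..<m}. f i)"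
  proof -
    have "wprod m w = wprod a w * (\<Prod>i\<in>{a..<m}. f i)" using wprod_split[of a m w] ab by (simp add: f_def)
    also have "(\<Prod>i\<in>{a..<m}. f i) = (\<Prod>i\<in>{a..<b}. f i) * (\<Prod>i\<in>{b..<m}. f i)"
      using prod.atLeastLessThan_concat[of a b m f] ab by simp
    finally show ?thesis by (simp add: mult.assoc)
  qed
  have wi: "wprod (b - a) wi = (\<Prod>i\<in>{a..<b}. f i)"
  proof -
    have "(\<Prod>i\<in>{a..<b}. f i) = (\<Prod>i\<in>{0..<b - a}. f (a + i))"
      using prod.atLeastLessThan_shift_0[of f a b] by (simp add: comp_def)
    then show ?thesis by (simp add: wprod_def wi_def f_def atLeast0LessThan)
  qed
  have wo: "wprod (m - (b - a)) wo = wprod a w * (\<Prod>i\<in>{b..<m}. f i)"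
  proof -
    have "wprod (m - (b - a)) wo = wprod a wo * (\<Prod>i\<in>{a..<m - (b - a)}. r (wo i) (wo (Suc i)))"
      using wprod_split[of a "m - (b - a)" wo] ab by simp
    also have "wprod a wo = wprod a w" unfolding wprod_def wo_def by (intro prod.cong) auto
    also have "(\<Prod>i\<in>{a..<m - (b - a)}. r (wo i) (wo (Suc i))) = (\<Prod>i\<in>{a..<m - (b - a)}. f (i + (b - a)))"
    proof (intro prod.cong refl)
      fix i assume i: "i \<in> {a..<m - (b - a)}"
      have "wo i = w (i + (b - a))" using ab i by (cases "i = a") (auto simp: wo_def)
      moreover have "wo (Suc i) = w (Suc (i + (b - a)))" using i by (simp add: wo_def)
      ultimately show "r (wo i) (wo (Suc i)) = f (i + (b - a))" by (simp add: f_def)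
    qed
    also have "\<dots> = (\<Prod>i\<in>{b..<m}. f i)"
      using prod.shift_bounds_nat_ivl[of f a "b - a" "m - (b - a)"] ab by simp
    finally show ?thesis .
  qed
  show "wprod m w = wprod (b - a) wi * wprod (m - (b - a)) wo"
    using wm wi wo by (simp add: ac_simps)
qed

theorem short_cycle:
  assumes "cw m0 w0" "wprod m0 w0 \<noteq> 1"
  shows "\<exists>m w. cw m w \<and> wprod m w \<noteq> 1 \<and> 3 \<le> m \<and>
     (\<forall>a b. a < b \<and> b \<le> m \<and> w a = w b \<longrightarrow> a = 0 \<and> b = m)"
proof -
  define P where "P m \<longleftrightarrow> (\<exists>w. cw m w \<and> wprod m w \<noteq> 1)" for m
  have "P m0" using assms by (auto simp: P_def)
  then have Pm: "P (LEAST m. P m)" by (rule LeastI)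
  define m where "m = (LEAST m. P m)"
  obtain w where w: "cw m w" "wprod m w \<noteq> 1" using Pm unfolding P_def m_def by blast
  have minl: "m' < m \<Longrightarrow> \<not> P m'" for m' unfolding m_def by (rule not_less_Least)
  have inj: "\<forall>a b. a < b \<and> b \<le> m \<and> w a = w b \<longrightarrow> a = 0 \<and> b = m"
  proof (intro allI impI)
    fix a b assume ab: "a < b \<and> b \<le> m \<and> w a = w b"
    show "a = 0 \<and> b = m"
    proof (rule ccontr)
      assume nab: "\<not> (a = 0 \<and> b = m)"
      from cw_split[OF w(1), of a b] ab obtain wi wo where
        s: "cw (b - a) wi" "cw (m - (b - a)) wo" "wprod m w = wprod (b - a) wi * wprod (m - (b - a)) wo"
        by blast
      have "wprod (b - a) wi \<noteq> 1 \<or> wprod (m - (b - a)) wo \<noteq> 1" using s(3) w(2) by auto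
      moreover have "b - a < m" using ab nab by auto
      moreover have "m - (b - a) < m" using ab by auto
      ultimately show False using minl s(1,2) unfolding P_def by blast
    qed
  qed
  have m3: "3 \<le> m"
  proof (rule ccontr)
    assume "\<not> 3 \<le> m"
    then have "m = 0 \<or> m = 1 \<or> m = 2" by auto
    moreover have "m \<noteq> 0"
    proof
      assume "m = 0" then show False using w(2) by (simp add: wprod_def)
    qed
    moreover have "m \<noteq> 1"
    proof
      assume "m = 1"
      then have "E (w 0) (w 1)" "w 1 = w 0" using w(1) by (auto simp: cw_def)
      then show False using Eirr by metis
    qed
    moreover have "m \<noteq> 2"
    proof
      assume m2: "m = 2"
      then have "E (w 0) (w 1)" "w 2 = w 0" using w(1) by (auto simp: cw_def)
      then have "wprod m w = r (w 0) (w 1) * r (w 1) (w 0)"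
        using m2 by (simp add: wprod_def numeral_2_eq_2 lessThan_Suc)
      also have "\<dots> = 1" using rinv \<open>E (w 0) (w 1)\<close> by (simp add: mult.commute)
      finally show False using w(2) by simp
    qed
    ultimately show False by blast
  qed
  show ?thesis using w m3 inj by blast
qed

theorem short_cycle_lt1:
  assumes "cw m0 w0" "wprod m0 w0 \<noteq> 1"
  shows "\<exists>m w. cw m w \<and> wprod m w < 1 \<and> 3 \<le> m \<and>
     (\<forall>a b. a < b \<and> b \<le> m \<and> w a = w b \<longrightarrow> a = 0 \<and> b = m)"
proof -
  obtain m w where w: "cw m w" "wprod m w \<noteq> 1" "3 \<le> m"
    and inj: "\<forall>a b. a < b \<and> b \<le> m \<and> w a = w b \<longrightarrow> a = 0 \<and> b = m"
    using short_cycle[OF assms] by blast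
  have pos: "wprod m w > 0" using w(1) wprod_pos by (simp add: cw_def)
  show ?thesis
  proof (cases "wprod m w < 1")
    case True then show ?thesis using w inj by blast
  next
    case False
    then have gt: "wprod m w > 1" using w(2) by simp
    define w' where "w' = (\<lambda>i. w (m - i))"
    have r: "cw m w'" "wprod m w' * wprod m w = 1" using reverse_cw[OF w(1)] by (simp_all add: w'_def)
    have "wprod m w' < 1"
    proof (rule ccontr)
      assume "\<not> wprod m w' < 1"
      then have "wprod m w' * wprod m w > 1 * 1" using gt by (intro mult_le_less_imp_less) auto
      then show False using r(2) by simp
    qed
    moreover have "\<forall>a b. a < b \<and> b \<le> m \<and> w' a = w' b \<longrightarrow> a = 0 \<and> b = m"
    proof (intro allI impI)
      fix a b assume ab: "a < b \<and> b \<le> m \<and> w' a = w' b"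
      then have "m - b < m - a" "m - a \<le> m" "w (m - b) = w (m - a)" by (auto simp: w'_def)
      then have "m - b = 0 \<and> m - a = m" using inj by blast
      then show "a = 0 \<and> b = m" using ab by auto
    qed
    ultimately show ?thesis using r(1) w(3) by blast
  qed
qed

end


lemma deriv_step:
  fixes g :: "real \<Rightarrow> real"
  assumes "DERIV g x :> d" "g x \<noteq> 0"
  shows "DERIV (\<lambda>s. c - b / g s) x :> b / (g x)^2 * d"
proof -
  have "DERIV (\<lambda>s. c - b / g s) x :> 0 - (0 * g x - b * d) / (g x * g x)"
    by (intro derivative_intros assms)
  then show ?thesis by (simp add: power2_eq_square field_simps)
qed

lemma mobius:
  fixes m :: nat and a \<sigma> :: "nat \<Rightarrow> real"
  assumes m1: "1 \<le> m" and apos: "\<forall>i<m. a i > 0" and spos: "\<forall>i\<le>m. \<sigma> i > 0"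
    and per: "\<sigma> m = \<sigma> 0" and gt: "(\<Prod>i<m. (a i / \<sigma> i)^2) > 1"
  shows "\<exists>\<sigma>'. (\<forall>i\<le>m. \<sigma>' i > 0) \<and> \<sigma>' m = \<sigma>' 0 \<and> \<sigma>' 0 > \<sigma> 0 \<and>
     (\<forall>i<m. \<sigma>' (Suc i) + (a i)^2 / \<sigma>' i = \<sigma> (Suc i) + (a i)^2 / \<sigma> i)"
proof -
  define \<rho> where "\<rho> i = \<sigma> (Suc i) + (a i)^2 / \<sigma> i" for i
  define P where "P s = rec_nat s (\<lambda>i p. \<rho> i - (a i)^2 / p)" for s
  have P0: "P s 0 = s" for s by (simp add: P_def)
  have PS: "P s (Suc i) = \<rho> i - (a i)^2 / P s i" for s i by (simp add: P_def)
  have Psig: "i \<le> m \<Longrightarrow> P (\<sigma> 0) i = \<sigma> i" for i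
  proof (induction i)
    case 0 then show ?case by (simp add: P0)
  next
    case (Suc i)
    then have "P (\<sigma> 0) i = \<sigma> i" by simp
    then show ?case by (simp add: PS \<rho>_def)
  qed
  have Pge: "i \<le> m \<Longrightarrow> \<sigma> 0 \<le> s \<Longrightarrow> \<sigma> i \<le> P s i" for i s
  proof (induction i)
    case 0 then show ?case by (simp add: P0)
  next
    case (Suc i)
    then have ih: "\<sigma> i \<le> P s i" by simp
    have si: "\<sigma> i > 0" using spos Suc.prems by simp
    have "(a i)^2 / P s i \<le> (a i)^2 / \<sigma> i"
      using ih si by (intro divide_left_mono) auto
    then show ?case by (simp add: PS \<rho>_def)
  qed
  have Ppos: "i \<le> m \<Longrightarrow> \<sigma> 0 \<le> s \<Longrightarrow> P s i > 0" for i s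
    using Pge spos by (meson less_le_trans)
  have Pcont: "i \<le> m \<Longrightarrow> continuous_on {\<sigma> 0..} (\<lambda>s. P s i)" for i
  proof (induction i)
    case 0 then show ?case by (simp add: P0 continuous_on_id)
  next
    case (Suc i)
    then have ih: "continuous_on {\<sigma> 0..} (\<lambda>s. P s i)" by simp
    have "continuous_on {\<sigma> 0..} (\<lambda>s. \<rho> i - (a i)^2 / P s i)"
      using Suc.prems Ppos by (intro continuous_intros ih) (auto simp: less_le)
    then show ?case by (simp add: PS)
  qed
  define D where "D i = (\<Prod>j<i. (a j / \<sigma> j)^2)" for i
  have Pder: "i \<le> m \<Longrightarrow> DERIV (\<lambda>s. P s i) (\<sigma> 0) :> D i" for i
  proof (induction i)
    case 0 then show ?case by (simp add: P0 D_def)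
  next
    case (Suc i)
    then have ih: "DERIV (\<lambda>s. P s i) (\<sigma> 0) :> D i" by simp
    have si: "\<sigma> i > 0" using spos Suc.prems by simp
    have "P (\<sigma> 0) i = \<sigma> i" using Psig Suc.prems by simp
    then have "DERIV (\<lambda>s. \<rho> i - (a i)^2 / P s i) (\<sigma> 0) :> (a i)^2 / (\<sigma> i)^2 * D i"
      using deriv_step[OF ih] si by simp
    moreover have "(a i)^2 / (\<sigma> i)^2 * D i = D (Suc i)"
      by (simp add: D_def power_divide mult.commute)
    ultimately show ?case by (simp add: PS)
  qed
  define h where "h s = P s m - s" for s
  have h0: "h (\<sigma> 0) = 0" using Psig[of m] per by (simp add: h_def)
  have hder: "DERIV h (\<sigma> 0) :> D m - 1"
    unfolding h_def by (intro derivative_intros Pder) simp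
  have "D m - 1 > 0" using gt by (simp add: D_def)
  from DERIV_pos_inc_right[OF hder this] obtain \<delta> where \<delta>: "\<delta> > 0"
    "\<forall>t>0. t < \<delta> \<longrightarrow> h (\<sigma> 0) < h (\<sigma> 0 + t)" by blast
  define s1 where "s1 = \<sigma> 0 + \<delta> / 2"
  have hs1: "h s1 > 0"
  proof -
    have "\<delta> / 2 > 0" "\<delta> / 2 < \<delta>" using \<delta>(1) by simp_all
    then have "h (\<sigma> 0) < h (\<sigma> 0 + \<delta> / 2)" using \<delta>(2) by blast
    then show ?thesis using h0 by (simp add: s1_def)
  qed
  have s1gt: "s1 > \<sigma> 0" using \<delta> by (simp add: s1_def)
  obtain k where mk: "m = Suc k" using m1 by (cases m) auto
  define s2 where "s2 = max s1 (\<rho> k) + 1"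
  have s12: "s1 \<le> s2" by (simp add: s2_def)
  have "P s2 m < \<rho> k"
  proof -
    have "P s2 k > 0" using Ppos[of k s2] mk s12 s1gt by simp
    moreover have "a k > 0" using apos mk by simp
    ultimately have "(a k)^2 / P s2 k > 0" by simp
    then show ?thesis by (simp add: mk PS)
  qed
  then have hs2: "h s2 < 0" by (simp add: h_def s2_def)
  have "continuous_on {s1..s2} h"
  proof -
    have "continuous_on {\<sigma> 0..} h" unfolding h_def by (intro continuous_intros Pcont) simp
    moreover have "{s1..s2} \<subseteq> {\<sigma> 0..}" using s1gt by auto
    ultimately show ?thesis by (rule continuous_on_subset)
  qed
  from IVT2'[of h s2 0 s1, OF _ _ s12 this] hs1 hs2
  obtain s' where s': "s1 \<le> s'" "s' \<le> s2" "h s' = 0" by auto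
  have s'ge: "\<sigma> 0 \<le> s'" using s1gt s'(1) by simp
  show ?thesis
  proof (intro exI[of _ "\<lambda>i. P s' i"] conjI allI impI)
    fix i assume "i \<le> m" then show "P s' i > 0" using Ppos s'ge by simp
  next
    show "P s' m = P s' 0" using s'(3) by (simp add: h_def P0)
  next
    show "P s' 0 > \<sigma> 0" using s'(1) s1gt by (simp add: P0)
  next
    fix i assume i: "i < m"
    have "P s' i > 0" using Ppos s'ge i by simp
    then show "P s' (Suc i) + (a i)^2 / P s' i = \<sigma> (Suc i) + (a i)^2 / \<sigma> i"
      by (simp add: PS \<rho>_def)
  qed
qed


context tf
begin

context
  fixes S assumes S: "cpset A S"
    and noR: "\<forall>c\<in>S. \<forall>d\<in>S. c \<noteq> d \<longrightarrow> \<not> (\<forall>i. 0 < c i \<longrightarrow> 0 < d i)"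
begin

definition col :: "'n \<Rightarrow> 'n \<Rightarrow> 'n \<Rightarrow> real" where
  "col p q = (THE c. c \<in> S \<and> c p > 0 \<and> c q > 0)"

lemma col_uniq:
  assumes "c \<in> S" "d \<in> S" "p \<noteq> q" "c p > 0" "c q > 0" "d p > 0" "d q > 0"
  shows "c = d"
proof (rule ccontr)
  assume "c \<noteq> d"
  have "\<forall>i. 0 < c i \<longrightarrow> 0 < d i"
  proof (intro allI impI)
    fix i assume "0 < c i"
    then have "i = p \<or> i = q" using edge_supp[OF S assms(1,3,4,5), of i] by auto
    then show "0 < d i" using assms by auto
  qed
  then show False using noR assms(1,2) \<open>c \<noteq> d\<close> by blast
qed

lemma col_prop:
  assumes "graph_edge A p q"
  shows "col p q \<in> S \<and> col p q p > 0 \<and> col p q q > 0"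
proof -
  obtain c where c: "c \<in> S" "c p > 0" "c q > 0" using edge_col[OF S assms] by blast
  have pq: "p \<noteq> q" using assms by (simp add: graph_edge_def)
  have "col p q = c" unfolding col_def
  proof (rule the_equality)
    show "c \<in> S \<and> 0 < c p \<and> 0 < c q" using c by simp
  next
    fix d assume "d \<in> S \<and> 0 < d p \<and> 0 < d q"
    then show "d = c" using col_uniq[OF _ c(1) pq _ _ c(2,3)] by blast
  qed
  then show ?thesis using c by simp
qed

lemma col_eq:
  assumes "c \<in> S" "p \<noteq> q" "c p > 0" "c q > 0"
  shows "col p q = c"
proof -
  have e: "graph_edge A p q" using supp_edge[OF S assms] .
  show ?thesis using col_uniq[OF _ assms(1,2) _ _ assms(3,4)] col_prop[OF e] by blast
qed

lemma col_sym:
  assumes "graph_edge A p q"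
  shows "col q p = col p q"
proof -
  have "p \<noteq> q" using assms by (simp add: graph_edge_def)
  then show ?thesis using col_eq[of "col p q" q p] col_prop[OF assms] by auto
qed

lemma col_zero:
  assumes "graph_edge A p q" "l \<noteq> p" "l \<noteq> q"
  shows "col p q l = 0"
proof -
  have "p \<noteq> q" using assms by (simp add: graph_edge_def)
  then show ?thesis using col_prop[OF assms(1)] edge_supp[OF S, of "col p q" p q l] assms(2,3) by blast
qed

lemma col_pos_iff:
  assumes "graph_edge A p q"
  shows "col p q l > 0 \<longleftrightarrow> l = p \<or> l = q"
  using col_prop[OF assms] col_zero[OF assms] by (cases "l = p \<or> l = q") auto

lemma A_col:
  assumes "graph_edge A p q"
  shows "A $ p $ q = col p q p * col p q q"
proof -
  let ?c = "col p q"
  have c: "?c \<in> S" "?c p > 0" "?c q > 0" using col_prop[OF assms] by auto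
  have pq: "p \<noteq> q" using assms by (simp add: graph_edge_def)
  have "A $ p $ q = (\<Sum>d\<in>S. d p * d q)" by (rule AS[OF S])
  also have "\<dots> = ?c p * ?c q + (\<Sum>d\<in>S - {?c}. d p * d q)"
    using c(1) finS[OF S] by (simp add: sum.remove)
  also have "(\<Sum>d\<in>S - {?c}. d p * d q) = 0"
  proof (intro sum.neutral ballI)
    fix d assume d: "d \<in> S - {?c}"
    show "d p * d q = 0"
    proof (rule ccontr)
      assume "d p * d q \<noteq> 0"
      then have "d p > 0" "d q > 0" using nnS[OF S, of d p] nnS[OF S, of d q] d by (auto simp: less_le)
      then have "d = ?c" using col_uniq[OF _ c(1) pq _ _ c(2,3)] d by blast
      then show False using d by simp
    qed
  qed
  finally show ?thesis by simp
qed

lemma noSing: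
  assumes "c \<in> S"
  shows "\<exists>p q. p \<noteq> q \<and> c p > 0 \<and> c q > 0"
proof -
  obtain p q where pq: "p \<noteq> q" "c p > 0" "\<forall>l. l \<noteq> p \<and> l \<noteq> q \<longrightarrow> c l = 0"
    using supp2[OF S assms] by blast
  show ?thesis
  proof (cases "c q > 0")
    case True then show ?thesis using pq by blast
  next
    case False
    then have cq: "c q = 0" using nnS[OF S assms, of q] by simp
    obtain j where e: "graph_edge A p j" using exists_edge by blast
    have pj: "p \<noteq> j" using e by (simp add: graph_edge_def)
    let ?d = "col p j"
    have d: "?d \<in> S" "?d p > 0" "?d j > 0" using col_prop[OF e] by auto
    have cj: "c j = 0" using pq(3) cq pj by (cases "j = q") auto
    then have "c \<noteq> ?d" using d(3) by auto
    moreover have "\<forall>i. 0 < c i \<longrightarrow> 0 < ?d i"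
    proof (intro allI impI)
      fix i assume "0 < c i"
      then have "i = p" using pq(3) cq by (cases "i = p \<or> i = q") auto
      then show "0 < ?d i" using d(2) by simp
    qed
    ultimately show ?thesis using noR assms d(1) by blast
  qed
qed

lemma singular_of_potential:
  assumes ypos: "\<forall>v. y v > 0"
    and ypot: "\<forall>i j. graph_edge A i j \<longrightarrow> y j = y i * (col i j i / col i j j)"
  shows "\<not> invertible (comparison_matrix A)"
proof -
  have term0: "c i * (2 * c i * y i - (\<Sum>j\<in>UNIV. c j * y j)) = 0" if c: "c \<in> S" for c i
  proof (cases "c i > 0")
    case False
    then have "c i = 0" using nnS[OF S c, of i] by simp
    then show ?thesis by simp
  next
    case True
    obtain p q where pq: "p \<noteq> q" "c p > 0" "c q > 0" using noSing[OF c] by blast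
    have ipq: "i = p \<or> i = q" using edge_supp[OF S c pq, of i] True by auto
    obtain ou where ou: "ou \<noteq> i" "c ou > 0" "\<forall>l. l \<noteq> i \<and> l \<noteq> ou \<longrightarrow> c l = 0"
    proof
      show "(if i = p then q else p) \<noteq> i" using pq(1) ipq by auto
      show "c (if i = p then q else p) > 0" using pq by auto
      show "\<forall>l. l \<noteq> i \<and> l \<noteq> (if i = p then q else p) \<longrightarrow> c l = 0"
        using edge_supp[OF S c pq] ipq by auto
    qed
    have e: "graph_edge A i ou" using supp_edge[OF S c _ True ou(2)] ou(1) by simp
    have cc: "col i ou = c" using col_eq[OF c _ True ou(2)] ou(1) by simp
    have "y ou = y i * (c i / c ou)" using ypot e cc by simp
    then have yo: "c ou * y ou = c i * y i" using ou(2) by (simp add: field_simps)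
    have "(\<Sum>j\<in>UNIV. c j * y j) = c i * y i + c ou * y ou"
      by (rule sum2[OF ou(1)[symmetric]]) (use ou(3) in auto)
    then show ?thesis using yo by simp
  qed
  have mv0: "mv y i = 0" for i
  proof -
    have "mv y i = (\<Sum>c\<in>S. 2 * (c i * c i) * y i) - (\<Sum>j\<in>UNIV. (\<Sum>c\<in>S. c i * c j) * y j)"
      unfolding mv_def AS[OF S] by (simp add: sum_distrib_left sum_distrib_right)
    also have "(\<Sum>j\<in>UNIV. (\<Sum>c\<in>S. c i * c j) * y j) = (\<Sum>c\<in>S. c i * (\<Sum>j\<in>UNIV. c j * y j))"
      by (simp add: sum_distrib_left sum_distrib_right sum.swap[of _ S] mult.assoc)
    finally have "mv y i = (\<Sum>c\<in>S. c i * (2 * c i * y i - (\<Sum>j\<in>UNIV. c j * y j)))"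
      by (simp add: sum_subtractf right_diff_distrib algebra_simps)
    also have "\<dots> = 0" using term0 by (intro sum.neutral) blast
    finally show ?thesis .
  qed
  define Y where "Y = (\<chi> j. y j)"
  have "comparison_matrix A *v Y = 0"
    by (simp add: vec_eq_iff Mv[OF S] Y_def mv0)
  moreover have "Y \<noteq> 0"
  proof
    assume "Y = 0"
    then have "y undefined = 0" by (metis Y_def vec_lambda_beta zero_index)
    then show False using ypos by (metis less_irrefl)
  qed
  ultimately show ?thesis
    unfolding invertible_left_inverse matrix_left_invertible_ker by blast
qed


lemma supp_indep:
  assumes "\<forall>l. 0 \<le> u l" "\<forall>l. 0 \<le> v l" "u k > 0" "v k' > 0" "(u l > 0) \<noteq> (v l > 0)"
  shows "\<not> vdep u v"
proof
  assume "vdep u v"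
  then obtain a b where ab: "a \<noteq> 0 \<or> b \<noteq> 0" "\<forall>i. a * u i + b * v i = 0" unfolding vdep_def by blast
  have a0: "a \<noteq> 0"
  proof
    assume "a = 0" then have "b \<noteq> 0" using ab by simp
    then have "v k' = 0" using ab(2) \<open>a = 0\<close> by (metis add_0 mult_eq_0_iff mult_zero_left)
    then show False using assms(4) by simp
  qed
  have b0: "b \<noteq> 0"
  proof
    assume "b = 0" then have "u k = 0" using ab(2) a0 by (metis add_0_right mult_eq_0_iff mult_zero_left)
    then show False using assms(3) by simp
  qed
  have uv: "\<forall>i. u i = (- b / a) * v i"
  proof
    fix i have "a * u i = - b * v i" using ab(2) by (simp add: eq_neg_iff_add_eq_0)
    then show "u i = (- b / a) * v i" using a0 by (simp add: field_simps)
  qed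
  have "- b / a > 0"
  proof -
    have "u k' = (- b / a) * v k'" using uv by blast
    then have h: "0 \<le> (- b / a) * v k'" using assms(1) by metis
    have "0 \<le> - b / a"
    proof (rule ccontr)
      assume "\<not> 0 \<le> - b / a"
      then have "(- b / a) * v k' < 0" using assms(4) by (intro mult_neg_pos) auto
      then show False using h by linarith
    qed
    moreover have "0 \<noteq> - b / a" using a0 b0 by simp
    ultimately show ?thesis using order.not_eq_order_implies_strict[of 0 "- b / a"] by blast
  qed
  then obtain cst where cst: "cst > 0" "\<forall>i. u i = cst * v i" using uv by blast
  have "(u l > 0) = (v l > 0)" using cst by (simp add: zero_less_mult_iff)
  then show False using assms(5) by simp
qed

lemma deform:
  assumes m3: "3 \<le> m" and wm: "w m = w 0" and we: "\<forall>i<m. graph_edge A (w i) (w (Suc i))"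
    and winj: "\<forall>a b. a < b \<and> b \<le> m \<and> w a = w b \<longrightarrow> a = 0 \<and> b = m"
    and plt: "(\<Prod>i<m. col (w i) (w (Suc i)) (w i) / col (w i) (w (Suc i)) (w (Suc i))) < 1"
  shows "\<exists>T. cpset A T \<and> card T = card S \<and> T \<noteq> S"
proof -
  define cc where "cc i = col (w i) (w (Suc i))" for i
  define x where "x i = cc i (w i)" for i
  define z where "z i = cc i (w (Suc i))" for i
  define a where "a i = A $ w i $ w (Suc i)" for i
  define \<sigma> where "\<sigma> i = (x (i mod m))^2" for i
  have m0: "m > 0" using m3 by simp
  have F1: "i < m \<Longrightarrow> w i \<noteq> w (Suc i)" for i using we by (simp add: graph_edge_def)
  have ccS: "i < m \<Longrightarrow> cc i \<in> S" for i using col_prop we by (simp add: cc_def)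
  have xpos: "i < m \<Longrightarrow> x i > 0" for i using col_prop we by (simp add: x_def cc_def)
  have zpos: "i < m \<Longrightarrow> z i > 0" for i using col_prop we by (simp add: z_def cc_def)
  have axz: "i < m \<Longrightarrow> a i = x i * z i" for i using A_col we by (simp add: a_def x_def z_def cc_def)
  have apos: "i < m \<Longrightarrow> a i > 0" for i using axz xpos zpos by simp
  have sig: "i < m \<Longrightarrow> \<sigma> i = (x i)^2" for i by (simp add: \<sigma>_def)
  have sigm: "\<sigma> m = \<sigma> 0" by (simp add: \<sigma>_def)
  have sigpos: "\<forall>i\<le>m. \<sigma> i > 0"
  proof (intro allI impI)
    fix i assume "i \<le> m"
    have "i mod m < m" using m0 by simp
    then have "x (i mod m) > 0" using xpos by blast
    then show "\<sigma> i > 0" by (simp add: \<sigma>_def)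
  qed
  have ccform: "i < m \<Longrightarrow> cc i l = (if l = w i then x i else if l = w (Suc i) then z i else 0)" for i l
    using col_zero we by (auto simp: cc_def x_def z_def)
  have gt: "(\<Prod>i<m. (a i / \<sigma> i)^2) > 1"
  proof -
    define P where "P = (\<Prod>i<m. x i / z i)"
    have P: "P = (\<Prod>i<m. x i) / (\<Prod>i<m. z i)" unfolding P_def by (rule prod_dividef)
    have "P < 1" using plt by (simp add: P_def x_def z_def cc_def)
    moreover have "P > 0" unfolding P_def using xpos zpos by (intro prod_pos) simp
    ultimately have "1 / P > 1" by simp
    have "(\<Prod>i<m. (a i / \<sigma> i)^2) = (\<Prod>i<m. z i / x i)^2"
      unfolding prod_power_distrib
    proof (intro prod.cong refl)
      fix i assume "i \<in> {..<m}"
      then have "i < m" by simp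
      then show "(a i / \<sigma> i)^2 = (z i / x i)^2"
        using axz sig xpos by (simp add: power2_eq_square field_simps)
    qed
    also have "(\<Prod>i<m. z i / x i) = 1 / P"
      using P by (simp add: prod_dividef)
    finally show ?thesis using \<open>1 / P > 1\<close> by (simp add: one_less_power)
  qed
  obtain \<sigma>' where s': "\<forall>i\<le>m. \<sigma>' i > 0" "\<sigma>' m = \<sigma>' 0" "\<sigma>' 0 > \<sigma> 0"
    "\<forall>i<m. \<sigma>' (Suc i) + (a i)^2 / \<sigma>' i = \<sigma> (Suc i) + (a i)^2 / \<sigma> i"
    using mobius[of m a \<sigma>] m3 apos sigpos sigm gt by auto
  define nc where "nc i l = (if l = w i then sqrt (\<sigma>' i) else if l = w (Suc i) then a i / sqrt (\<sigma>' i) else 0)" for i l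
  have ncpos: "i < m \<Longrightarrow> nc i l > 0 \<longleftrightarrow> l = w i \<or> l = w (Suc i)" for i l
  proof -
    assume i: "i < m"
    have "\<sigma>' i > 0" using s'(1) i by simp
    moreover have "a i > 0" using apos i by simp
    ultimately show ?thesis by (simp add: nc_def)
  qed
  have ncnn: "i < m \<Longrightarrow> 0 \<le> nc i l" for i l
    using ncpos[of i l] by (cases "nc i l > 0") (auto simp: nc_def)
  have ccpos: "i < m \<Longrightarrow> cc i l > 0 \<longleftrightarrow> l = w i \<or> l = w (Suc i)" for i l
    using col_pos_iff we by (simp add: cc_def)
  have F4: "i < m \<Longrightarrow> j < m \<Longrightarrow> (\<forall>l. (l = w i \<or> l = w (Suc i)) \<longleftrightarrow> (l = w j \<or> l = w (Suc j))) \<Longrightarrow> i = j" for i j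
  proof -
    assume ij: "i < m" "j < m" and eq: "\<forall>l. (l = w i \<or> l = w (Suc i)) \<longleftrightarrow> (l = w j \<or> l = w (Suc j))"
    have wi: "\<And>a b. a \<le> m \<Longrightarrow> b \<le> m \<Longrightarrow> w a = w b \<Longrightarrow> a = b \<or> (a = 0 \<and> b = m) \<or> (a = m \<and> b = 0)"
      using winj by (metis linorder_neqE_nat)
    have "w i = w j \<or> w i = w (Suc j)" using eq by blast
    moreover have "w (Suc i) = w j \<or> w (Suc i) = w (Suc j)" using eq by blast
    ultimately show "i = j"
    proof (elim disjE)
      assume "w i = w j" then show "i = j" using wi[of i j] ij by auto
    next
      assume h1: "w i = w (Suc j)" and h2: "w (Suc i) = w j"
      have c1: "i = Suc j \<or> (i = 0 \<and> Suc j = m)" using wi[of i "Suc j"] ij h1 by auto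
      have c2: "Suc i = j \<or> (Suc i = m \<and> j = 0)" using wi[of "Suc i" j] ij h2 by auto
      show "i = j" using c1 c2 m3 by auto
    next
      assume "w i = w (Suc j)" "w (Suc i) = w (Suc j)"
      then have "w i = w (Suc i)" by simp
      then show "i = j" using F1 ij by simp
    next
      assume "w i = w j" then show "i = j" using wi[of i j] ij by auto
    qed
  qed
  have cc_inj: "inj_on cc {..<m}"
  proof (rule inj_onI)
    fix i j assume ij: "i \<in> {..<m}" "j \<in> {..<m}" "cc i = cc j"
    have "\<forall>l. (l = w i \<or> l = w (Suc i)) \<longleftrightarrow> (l = w j \<or> l = w (Suc j))"
    proof
      fix l show "(l = w i \<or> l = w (Suc i)) \<longleftrightarrow> (l = w j \<or> l = w (Suc j))"
        using ccpos[of i l] ccpos[of j l] ij by simp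
    qed
    then show "i = j" using F4[of i j] ij by simp
  qed
  have nc_inj: "inj_on nc {..<m}"
  proof (rule inj_onI)
    fix i j assume ij: "i \<in> {..<m}" "j \<in> {..<m}" "nc i = nc j"
    have "\<forall>l. (l = w i \<or> l = w (Suc i)) \<longleftrightarrow> (l = w j \<or> l = w (Suc j))"
    proof
      fix l show "(l = w i \<or> l = w (Suc i)) \<longleftrightarrow> (l = w j \<or> l = w (Suc j))"
        using ncpos[of i l] ncpos[of j l] ij by simp
    qed
    then show "i = j" using F4[of i j] ij by simp
  qed
  define C where "C = cc ` {..<m}"
  define N where "N = nc ` {..<m}"
  define T where "T = (S - C) \<union> N"
  have CS: "C \<subseteq> S" using ccS by (auto simp: C_def)
  have fin: "finite S" using finS[OF S] .
  have ncS: "i < m \<Longrightarrow> nc i \<in> S \<Longrightarrow> nc i = cc i" for i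
  proof -
    assume i: "i < m" "nc i \<in> S"
    have "col (w i) (w (Suc i)) = nc i"
      using col_eq[OF i(2) F1[OF i(1)]] ncpos[OF i(1)] by simp
    then show ?thesis by (simp add: cc_def)
  qed
  have disj: "(S - C) \<inter> N = {}"
  proof -
    have "nc i \<notin> S - C" if "i < m" for i
      using ncS[OF that] that by (auto simp: C_def)
    then show ?thesis by (auto simp: N_def)
  qed
  have key: "(\<Sum>i<m. nc i l * nc i l') = (\<Sum>i<m. cc i l * cc i l')" for l l'
  proof (cases "l = l'")
    case False
    show ?thesis
    proof (intro sum.cong refl)
      fix i assume "i \<in> {..<m}"
      then have i: "i < m" by simp
      have sq: "sqrt (\<sigma>' i) > 0" using s'(1) i by simp
      have "sqrt (\<sigma>' i) * (a i / sqrt (\<sigma>' i)) = x i * z i" using sq axz[OF i] by simp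
      then show "nc i l * nc i l' = cc i l * cc i l'"
        using False F1[OF i] unfolding nc_def ccform[OF i] by (auto simp: mult.commute)
    qed
  next
    case True
    define G where "G j = (if l = w j then \<sigma> j - \<sigma>' j else 0)" for j
    have nsq: "i < m \<Longrightarrow> nc i l * nc i l = (if l = w i then \<sigma>' i else 0) + (if l = w (Suc i) then (a i)^2 / \<sigma>' i else 0)" for i
    proof -
      assume i: "i < m"
      have "\<sigma>' i > 0" using s'(1) i by simp
      then show ?thesis using F1[OF i] by (auto simp: nc_def power2_eq_square)
    qed
    have csq: "i < m \<Longrightarrow> cc i l * cc i l = (if l = w i then \<sigma> i else 0) + (if l = w (Suc i) then (a i)^2 / \<sigma> i else 0)" for i
    proof -
      assume i: "i < m"
      have "(z i)^2 = (a i)^2 / \<sigma> i" using axz[OF i] sig[OF i] xpos[OF i] by (simp add: power2_eq_square)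
      then show ?thesis using F1[OF i] sig[OF i] unfolding ccform[OF i] by (auto simp: power2_eq_square)
    qed
    have rec: "i < m \<Longrightarrow> (if l = w (Suc i) then (a i)^2 / \<sigma>' i else 0) =
        (if l = w (Suc i) then (a i)^2 / \<sigma> i else 0) + G (Suc i)" for i
      using s'(4) by (auto simp: G_def algebra_simps)
    have shift: "(\<Sum>i<m. G (Suc i)) = (\<Sum>i<m. G i)"
    proof -
      have "G m = G 0" using wm sigm s'(2) by (simp add: G_def)
      moreover have "(\<Sum>i<Suc m. G i) = G 0 + (\<Sum>i<m. G (Suc i))" by (rule sum.lessThan_Suc_shift)
      moreover have "(\<Sum>i<Suc m. G i) = (\<Sum>i<m. G i) + G m" by simp
      ultimately show ?thesis by simp
    qed
    have "(\<Sum>i<m. nc i l * nc i l') = (\<Sum>i<m. (if l = w i then \<sigma>' i else 0)) + (\<Sum>i<m. (if l = w (Suc i) then (a i)^2 / \<sigma>' i else 0))"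
      using True nsq by (simp add: sum.distrib)
    also have "(\<Sum>i<m. (if l = w (Suc i) then (a i)^2 / \<sigma>' i else 0)) =
        (\<Sum>i<m. (if l = w (Suc i) then (a i)^2 / \<sigma> i else 0)) + (\<Sum>i<m. G (Suc i))"
      using rec by (simp add: sum.distrib)
    also have "(\<Sum>i<m. (if l = w i then \<sigma>' i else 0)) = (\<Sum>i<m. (if l = w i then \<sigma> i else 0)) - (\<Sum>i<m. G i)"
      by (simp add: sum_subtractf[symmetric] G_def if_distrib cong: if_cong)
    also have "(\<Sum>i<m. cc i l * cc i l') = (\<Sum>i<m. (if l = w i then \<sigma> i else 0)) + (\<Sum>i<m. (if l = w (Suc i) then (a i)^2 / \<sigma> i else 0))"
      using True csq by (simp add: sum.distrib)
    ultimately show ?thesis using shift by simp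
  qed
  have sumT: "(\<Sum>e\<in>T. e l * e l') = (\<Sum>e\<in>S. e l * e l')" for l l'
  proof -
    have "(\<Sum>e\<in>T. e l * e l') = (\<Sum>e\<in>S - C. e l * e l') + (\<Sum>e\<in>N. e l * e l')"
      unfolding T_def using fin disj by (intro sum.union_disjoint) (auto simp: N_def)
    also have "(\<Sum>e\<in>N. e l * e l') = (\<Sum>i<m. nc i l * nc i l')"
      unfolding N_def using sum.reindex[OF nc_inj] by simp
    also have "\<dots> = (\<Sum>i<m. cc i l * cc i l')" by (rule key)
    also have "\<dots> = (\<Sum>e\<in>C. e l * e l')"
      unfolding C_def using sum.reindex[OF cc_inj, of "\<lambda>e. e l * e l'"] by simp
    also have "(\<Sum>e\<in>S - C. e l * e l') + (\<Sum>e\<in>C. e l * e l') = (\<Sum>e\<in>S. e l * e l')"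
      using sum.subset_diff[OF CS fin, of "\<lambda>e. e l * e l'"] by simp
    finally show ?thesis .
  qed
  have cardT: "card T = card S"
  proof -
    have "card T = card (S - C) + card N"
      unfolding T_def using fin disj by (intro card_Un_disjoint) (auto simp: N_def)
    also have "card N = m" unfolding N_def using card_image[OF nc_inj] by simp
    also have "card C = m" unfolding C_def using card_image[OF cc_inj] by simp
    then have "card (S - C) = card S - m" using card_Diff_subset[OF _ CS] fin CS finite_subset by metis
    moreover have "card C \<le> card S" using card_mono[OF fin CS] .
    ultimately show ?thesis using \<open>card C = m\<close> by simp
  qed
  have TS: "T \<noteq> S"
  proof
    assume "T = S"
    then have "nc 0 \<in> S" using m0 by (auto simp: T_def N_def)
    then have "nc 0 = cc 0" using ncS m0 by blast
    then have "nc 0 (w 0) = x 0" by (simp add: x_def)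
    then have "sqrt (\<sigma>' 0) = x 0" by (simp add: nc_def)
    then have "\<sigma>' 0 = (x 0)^2" using s'(1) by (metis le0 real_sqrt_pow2 less_imp_le)
    then show False using s'(3) sig m0 by simp
  qed
  have "cpset A T"
    unfolding cpset_def
  proof (intro conjI ballI allI impI)
    show "finite T" using fin by (simp add: T_def N_def)
  next
    fix e i assume "e \<in> T"
    then show "0 \<le> e i" using nnS[OF S] ncnn by (auto simp: T_def N_def)
  next
    fix i i'
    show "A $ i $ i' = (\<Sum>e\<in>T. e i * e i')" using sumT AS[OF S] by simp
  next
    fix e f assume ef: "e \<in> T" "f \<in> T" "e \<noteq> f"
    have nz: "g \<in> T \<Longrightarrow> \<exists>k. g k > 0" for g
    proof -
      assume "g \<in> T"
      then consider "g \<in> S" | i where "i < m" "g = nc i" by (auto simp: T_def N_def)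
      then show ?thesis
      proof cases
        case 1 then show ?thesis using nonzero[OF S] by blast
      next
        case 2 then show ?thesis using ncpos[of i "w i"] by blast
      qed
    qed
    have nn: "g \<in> T \<Longrightarrow> \<forall>l. 0 \<le> g l" for g
      using nnS[OF S] ncnn by (auto simp: T_def N_def)
    have "\<exists>l. (e l > 0) \<noteq> (f l > 0)"
    proof (rule ccontr)
      assume "\<not> (\<exists>l. (e l > 0) \<noteq> (f l > 0))"
      then have same: "\<forall>l. (e l > 0) = (f l > 0)" by blast
      consider "e \<in> S - C" "f \<in> S - C" | i where "i < m" "e = nc i" "f \<in> S - C"
        | i where "i < m" "f = nc i" "e \<in> S - C" | i j where "i < m" "j < m" "e = nc i" "f = nc j"
        using ef(1,2) by (auto simp: T_def N_def)
      then show False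
      proof cases
        case 1 then show ?thesis using noR same ef(3) by blast
      next
        case 2
        then have "f (w i) > 0" "f (w (Suc i)) > 0" using same ncpos by auto
        then have "col (w i) (w (Suc i)) = f" using col_eq[of f] 2 F1 by auto
        then show ?thesis using 2 by (auto simp: C_def cc_def)
      next
        case 3
        then have "e (w i) > 0" "e (w (Suc i)) > 0" using same ncpos by auto
        then have "col (w i) (w (Suc i)) = e" using col_eq[of e] 3 F1 by auto
        then show ?thesis using 3 by (auto simp: C_def cc_def)
      next
        case 4
        then have "i = j" using F4[of i j] ncpos same by auto
        then show ?thesis using 4 ef(3) by simp
      qed
    qed
    then obtain l where l: "(e l > 0) \<noteq> (f l > 0)" by blast
    obtain k k' where "e k > 0" "f k' > 0" using nz ef by blast
    then show "\<not> vdep e f" using supp_indep[OF nn[OF ef(1)] nn[OF ef(2)] _ _ l] by blast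
  qed
  then show ?thesis using cardT TS by blast
qed

end
end


context tf
begin

lemma nonsing_not_unique:
  assumes inv: "invertible (comparison_matrix A)" and S: "cpset A S"
  shows "\<exists>T. cpset A T \<and> card T = card S \<and> T \<noteq> S"
proof (cases "\<exists>c\<in>S. \<exists>d\<in>S. c \<noteq> d \<and> (\<forall>i. 0 < c i \<longrightarrow> 0 < d i)")
  case True
  then obtain c d where cd: "c \<in> S" "d \<in> S" "c \<noteq> d" "\<forall>i. 0 < c i \<longrightarrow> 0 < d i" by blast
  show ?thesis by (rule rotation[OF S cd])
next
  case False
  then have noR: "\<forall>c\<in>S. \<forall>d\<in>S. c \<noteq> d \<longrightarrow> \<not> (\<forall>i. 0 < c i \<longrightarrow> 0 < d i)" by blast
  define r where "r i j = col S i j i / col S i j j" for i j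
  interpret W: walks "graph_edge A" r
  proof
    fix i j assume "graph_edge A i j"
    then show "graph_edge A j i" using A_sym[OF S] by (auto simp: graph_edge_def)
  next
    fix i show "\<not> graph_edge A i i" by (simp add: graph_edge_def)
  next
    fix i j assume "graph_edge A i j"
    then show "r i j > 0" using col_prop[OF S noR] by (simp add: r_def)
  next
    fix i j assume e: "graph_edge A i j"
    have "col S j i = col S i j" using col_sym[OF S noR e] .
    moreover have "col S i j i > 0" "col S i j j > 0" using col_prop[OF S noR e] by auto
    ultimately show "r j i * r i j = 1" by (simp add: r_def)
  qed
  have conn: "\<forall>u v. (graph_edge A)\<^sup>*\<^sup>* u v" using irr by (simp add: irreducible_mat_def)
  have "\<not> (\<forall>m w. W.cw m w \<longrightarrow> W.wprod m w = 1)"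
  proof
    assume "\<forall>m w. W.cw m w \<longrightarrow> W.wprod m w = 1"
    from W.potential[OF conn this] obtain y where y: "\<forall>v. y v > 0" "\<forall>i j. graph_edge A i j \<longrightarrow> y j = y i * r i j"
      by blast
    have "\<not> invertible (comparison_matrix A)"
      by (rule singular_of_potential[OF S noR y(1)]) (use y(2) in \<open>simp add: r_def\<close>)
    then show False using inv by simp
  qed
  then obtain m0 w0 where "W.cw m0 w0" "W.wprod m0 w0 \<noteq> 1" by blast
  from W.short_cycle_lt1[OF this] obtain m w where mw: "W.cw m w" "W.wprod m w < 1" "3 \<le> m"
    "\<forall>a b. a < b \<and> b \<le> m \<and> w a = w b \<longrightarrow> a = 0 \<and> b = m" by blast
  show ?thesis
  proof (rule deform[OF S noR mw(3)])
    show "w m = w 0" using mw(1) by (simp add: W.cw_def)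
    show "\<forall>i<m. graph_edge A (w i) (w (Suc i))" using mw(1) by (simp add: W.cw_def)
    show "\<forall>a b. a < b \<and> b \<le> m \<and> w a = w b \<longrightarrow> a = 0 \<and> b = m" by (rule mw(4))
    show "(\<Prod>i<m. col S (w i) (w (Suc i)) (w i) / col S (w i) (w (Suc i)) (w (Suc i))) < 1"
      using mw(2) by (simp add: W.wprod_def r_def)
  qed
qed

end

theorem theorem4p1:
  fixes A :: "real^'n^'n"
  assumes "CARD('n) \<ge> 2"
    and "irreducible_mat A"
    and "completely_positive A"
    and "triangle_free_graph A"
  shows "(\<not> invertible (comparison_matrix A) \<longleftrightarrow> unique_cp_factorization A) \<and>
         (unique_cp_factorization A \<longleftrightarrow> unique_minimal_cp_factorization A)"
proof -
  interpret tf A using assms(1,2,4) by unfold_locales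
  obtain S0 where S0: "cpset A S0" "card S0 = cp_rank A" using exists_min[OF assms(3)] by blast
  have ab: "\<not> invertible (comparison_matrix A) \<Longrightarrow> unique_cp_factorization A"
    unfolding U1 using S0(1) a_imp_b by blast
  have ca: "unique_minimal_cp_factorization A \<Longrightarrow> \<not> invertible (comparison_matrix A)"
  proof
    assume u: "unique_minimal_cp_factorization A" and inv: "invertible (comparison_matrix A)"
    obtain T where T: "cpset A T" "card T = card S0" "T \<noteq> S0"
      using nonsing_not_unique[OF inv S0(1)] by blast
    show False using u T S0 unfolding U2 by metis
  qed
  have ba: "unique_cp_factorization A \<Longrightarrow> \<not> invertible (comparison_matrix A)"
  proof
    assume u: "unique_cp_factorization A" and inv: "invertible (comparison_matrix A)"
    obtain T where T: "cpset A T" "T \<noteq> S0"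
      using nonsing_not_unique[OF inv S0(1)] by blast
    show False using u T S0 unfolding U1 by metis
  qed
  have bc: "unique_cp_factorization A \<Longrightarrow> unique_minimal_cp_factorization A"
    unfolding U1 U2 using S0 by blast
  show ?thesis using ab ba bc ca by blast
qed


end
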